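(* Let $m,n\ge 1$ and let $\mathcal{H}=\mathbb{R}^{m\times n}$ with matrix inner product $\langle \mathbf{A},\mathbf{B}\rangle_{\mathcal{H}}=\mathbf{A}^\intercal\mathbf{B}\in\mathbb{R}^{n\times n}$. Let $\mathbf{V}\in\mathbb{R}^{n\times n}$ be a nonzero symmetric matrix such that $\langle \langle \mathbf{X},\mathbf{X}\rangle_{\mathcal{H}},\mathbf{V}/\|\mathbf{V}\|\rangle\ge 0$ for all $\mathbf{X}\in\mathcal{H}$, and set $\|\mathbf{X}\|_{\mathcal{H}}(\mathbf{V})=\big(\langle \mathbf{X}^\intercal\mathbf{X},\mathbf{V}/\|\mathbf{V}\|\rangle\big)^{1/2}$. Let $\mathcal{Y}$ be a label set and let $\mathcal{D}$ be a distribution over $\mathcal{H}\times\mathcal{Y}$ such that with probability $1$ we have $\|\mathbf{X}\|_{\mathcal{H}}(\mathbf{V})\le R'$. Let $\mathcal{H}'_p=\{\mathbf{W}'\in\mathcal{H}:\|\mathbf{W}'\|_{\mathcal{H}}(\mathbf{V})\le B'\}$ and let $\ell:\mathcal{H}'_p\times(\mathcal{H}\times\mathcal{Y})\to\mathbb{R}$ be a loss of the form $$\ell(\mathbf{W}',(\mathbf{X},y))=\Phi\Big(\big\langle \langle\mathbf{W}',\mathbf{X}\rangle_{\mathcal{H}},\tfrac{\mathbf{V}}{\|\mathbf{V}\|}\big\rangle,y\Big),$$ where for every $y\in\mathcal{Y}$ the map $a\mapsto\Phi(a,y)$ is $\rho$-Lipschitz and $\max_{a\in[-B'R',B'R']}|\Phi(a,y)|\le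 c'$. Then for any $\delta\in(0,1)$, with probability at least $1-\delta$ over the choice of an i.i.d. sample $\mathcal{S}$ of size $N$ from $\mathcal{D}$, $$\forall\,\mathbf{W}'\in\mathcal{H}'_p:\quad L_{\mathcal{D}}(\mathbf{W}')\le L_{\mathcal{S}}(\mathbf{W}')+\frac{2\rho B'R'}{\sqrt N}+c'\sqrt{\frac{2\ln(2/\delta)}{N}}.$$
   Context: For matrices $\mathbf{A},\mathbf{B}$ of the same size, $\langle\mathbf{A},\mathbf{B}\rangle=\sum_{i,j}a_{ij}b_{ij}$ is the Frobenius inner product and $\|\mathbf{A}\|$ the Frobenius norm. For a sample $\mathcal{S}=((\mathbf{X}_1,y_1),\dots,(\mathbf{X}_N,y_N))$, $L_{\mathcal{S}}(\mathbf{W}')=\frac1N\sum_{i=1}^N\ell(\mathbf{W}',(\mathbf{X}_i,y_i))$ is the empirical loss and $L_{\mathcal{D}}(\mathbf{W}')=\mathbb{E}_{(\mathbf{X},y)\sim\mathcal{D}}[\ell(\mathbf{W}',(\mathbf{X},y))]$ is the true loss. *)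

theory Defs
  imports "HOL-Probability.Probability"
begin

text \<open>H = real^'n^'m (m x n matrices, rows indexed by 'm). On real^'n^'n the
library inner product and norm are the Frobenius inner product and norm.\<close>

definition Vnormalized :: "real^'n^'n \<Rightarrow> real^'n^'n" where
  "Vnormalized V = V /\<^sub>R norm V"

definition innerH :: "real^'n^'m \<Rightarrow> real^'n^'m \<Rightarrow> real^'n^'n" where
  "innerH A B = transpose A ** B"

definition normHV :: "real^'n^'n \<Rightarrow> real^'n^'m \<Rightarrow> real" where
  "normHV V X = sqrt (inner (innerH X X) (Vnormalized V))"

definition lossV :: "(real \<Rightarrow> 'y \<Rightarrow> real) \<Rightarrow> real^'n^'n \<Rightarrow> real^'n^'m \<Rightarrow> ((real^'n^'m) \<times> 'y) \<Rightarrow> real" where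
  "lossV \<Phi> V W p = \<Phi> (inner (innerH W (fst p)) (Vnormalized V)) (snd p)"

end

theory Submission
  imports Defs
begin

definition sigs :: "nat \<Rightarrow> (nat \<Rightarrow> real) set" where
  "sigs N = PiE {..<N} (\<lambda>_. {-1,1})"

definition flipk :: "nat \<Rightarrow> (nat \<Rightarrow> real) \<Rightarrow> (nat \<Rightarrow> real)" where
  "flipk k \<sigma> = \<sigma>(k := - \<sigma> k)"

lemma finite_sigs[simp]: "finite (sigs N)"
  unfolding sigs_def by (auto intro!: finite_PiE)

lemma card_sigs: "card (sigs N) = 2 ^ N"
proof -
  have "card {-1,1::real} = 2" by simp
  then show ?thesis unfolding sigs_def by (simp add: card_PiE numeral_2_eq_2)
qed

lemma sigs_val: "\<sigma> \<in> sigs N \<Longrightarrow> i < N \<Longrightarrow> \<sigma> i = -1 \<or> \<sigma> i = 1"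
  unfolding sigs_def by (auto simp: PiE_iff)

lemma sigs_sq: "\<sigma> \<in> sigs N \<Longrightarrow> i < N \<Longrightarrow> \<sigma> i * \<sigma> i = 1"
  using sigs_val by fastforce

lemma flipk_in: "k < N \<Longrightarrow> \<sigma> \<in> sigs N \<Longrightarrow> flipk k \<sigma> \<in> sigs N"
  unfolding sigs_def flipk_def by (auto simp: PiE_iff extensional_def)

lemma flipk_flipk[simp]: "flipk k (flipk k \<sigma>) = \<sigma>"
  unfolding flipk_def by auto

lemma sum_flipk:
  assumes "k < N"
  shows "(\<Sum>\<sigma>\<in>sigs N. g \<sigma>) = (\<Sum>\<sigma>\<in>sigs N. g (flipk k \<sigma>))"
  by (rule sum.reindex_bij_witness[of _ "flipk k" "flipk k"]) (auto intro: flipk_in assms)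

lemma sum_sigs_cross:
  assumes "i < N" "j < N"
  shows "(\<Sum>\<sigma>\<in>sigs N. \<sigma> i * \<sigma> j) = (if i = j then 2 ^ N else 0)"
proof (cases "i = j")
  case True
  then show ?thesis using sigs_sq[OF _ assms(1)] by (simp add: card_sigs)
next
  case False
  have "(\<Sum>\<sigma>\<in>sigs N. \<sigma> i * \<sigma> j) = (\<Sum>\<sigma>\<in>sigs N. flipk i \<sigma> i * flipk i \<sigma> j)"
    by (rule sum_flipk[OF assms(1)])
  also have "\<dots> = - (\<Sum>\<sigma>\<in>sigs N. \<sigma> i * \<sigma> j)"
    using False by (simp add: flipk_def sum_negf)
  finally show ?thesis using False by simp
qed

lemma sigs_quad:
  "(\<Sum>\<sigma>\<in>sigs N. \<Sum>i<N. \<Sum>j<N. \<sigma> i * \<sigma> j * c i j) = 2 ^ N * (\<Sum>i<N. c i i)"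
proof -
  have "(\<Sum>\<sigma>\<in>sigs N. \<Sum>i<N. \<Sum>j<N. \<sigma> i * \<sigma> j * c i j)
      = (\<Sum>i<N. \<Sum>j<N. (\<Sum>\<sigma>\<in>sigs N. \<sigma> i * \<sigma> j) * c i j)"
    by (simp add: sum.swap[of _ "sigs N"] sum_distrib_right)
  also have "\<dots> = (\<Sum>i<N. \<Sum>j<N. (if i = j then 2 ^ N * c i j else 0))"
    by (intro sum.cong refl) (simp add: sum_sigs_cross)
  also have "\<dots> = 2 ^ N * (\<Sum>i<N. c i i)"
    by (simp add: sum_distrib_left)
  finally show ?thesis .
qed

lemma bdd_sigs:
  assumes "\<sigma> \<in> sigs N" "\<And>w i. w \<in> T \<Longrightarrow> i < N \<Longrightarrow> \<bar>h i w\<bar> \<le> K"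
  shows "bdd_above ((\<lambda>w. \<Sum>i<N. \<sigma> i * h i w) ` T)"
proof (rule bdd_aboveI2)
  fix w assume w: "w \<in> T"
  have "(\<Sum>i<N. \<sigma> i * h i w) \<le> (\<Sum>i<N. K)"
  proof (rule sum_mono)
    fix i assume "i \<in> {..<N}"
    then have "i < N" by simp
    with sigs_val[OF assms(1) this] assms(2)[OF w this] show "\<sigma> i * h i w \<le> K" by auto
  qed
  then show "(\<Sum>i<N. \<sigma> i * h i w) \<le> real N * K" by simp
qed

lemma sup_pair:
  fixes u p q :: "'w \<Rightarrow> real"
  assumes T: "T \<noteq> {}" and s: "s = -1 \<or> s = 1"
    and lip: "\<And>w w'. w \<in> T \<Longrightarrow> w' \<in> T \<Longrightarrow> s * (p w - p w') \<le> \<bar>q w - q w'\<bar>"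
    and b3: "bdd_above ((\<lambda>w. u w + s * q w) ` T)"
    and b4: "bdd_above ((\<lambda>w. u w - s * q w) ` T)"
  shows "(SUP w\<in>T. u w + s * p w) + (SUP w\<in>T. u w - s * p w)
       \<le> (SUP w\<in>T. u w + s * q w) + (SUP w\<in>T. u w - s * q w)"
proof -
  define R where "R = (SUP w\<in>T. u w + s * q w) + (SUP w\<in>T. u w - s * q w)"
  have key: "u w + s * p w + (u w' - s * p w') \<le> R" if w: "w \<in> T" "w' \<in> T" for w w'
  proof -
    have 1: "u w + s * q w \<le> (SUP w\<in>T. u w + s * q w)"
      "u w' + s * q w' \<le> (SUP w\<in>T. u w + s * q w)"
      "u w - s * q w \<le> (SUP w\<in>T. u w - s * q w)"
      "u w' - s * q w' \<le> (SUP w\<in>T. u w - s * q w)"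
      using w b3 b4 by (auto intro: cSUP_upper2)
    have 2: "s * (p w - p w') \<le> \<bar>q w - q w'\<bar>" using lip w .
    show ?thesis
    proof (cases "s * (q w - q w') \<ge> 0")
      case True
      have "\<bar>q w - q w'\<bar> = s * (q w - q w')" using s True by auto
      then show ?thesis using 1 2 unfolding R_def by (simp add: algebra_simps)
    next
      case False
      have "\<bar>q w - q w'\<bar> = - s * (q w - q w')" using s False by auto
      then show ?thesis using 1 2 unfolding R_def by (simp add: algebra_simps)
    qed
  qed
  have "(SUP w\<in>T. u w + s * p w) \<le> R - (SUP w\<in>T. u w - s * p w)"
  proof -
    have "(SUP w\<in>T. u w + s * p w) \<le> R - (u w' - s * p w')" if w': "w' \<in> T" for w'
      using key[OF _ w'] T by (intro cSUP_least) (auto simp: algebra_simps)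
    then have "\<forall>w'\<in>T. (SUP w\<in>T. u w + s * p w) \<le> R - (u w' - s * p w')" by blast
    then have "\<forall>w'\<in>T. (u w' - s * p w') \<le> R - (SUP w\<in>T. u w + s * p w)"
      by (auto simp: algebra_simps)
    then have "(SUP w\<in>T. u w - s * p w) \<le> R - (SUP w\<in>T. u w + s * p w)"
      using T by (intro cSUP_least) auto
    then show ?thesis by simp
  qed
  then show ?thesis unfolding R_def by simp
qed

lemma contraction:
  fixes T :: "'w set" and a :: "nat \<Rightarrow> 'w \<Rightarrow> real" and \<phi> :: "nat \<Rightarrow> real \<Rightarrow> real"
  assumes T: "T \<noteq> {}" and \<rho>: "0 \<le> \<rho>"
    and lip: "\<And>i u v. i < N \<Longrightarrow> \<bar>\<phi> i u - \<phi> i v\<bar> \<le> \<rho> * \<bar>u - v\<bar>"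
    and ba: "\<And>w i. w \<in> T \<Longrightarrow> i < N \<Longrightarrow> \<bar>a i w\<bar> \<le> M"
    and bp: "\<And>w i. w \<in> T \<Longrightarrow> i < N \<Longrightarrow> \<bar>\<phi> i (a i w)\<bar> \<le> M"
  shows "(\<Sum>\<sigma>\<in>sigs N. SUP w\<in>T. \<Sum>i<N. \<sigma> i * \<phi> i (a i w))
       \<le> (\<Sum>\<sigma>\<in>sigs N. SUP w\<in>T. \<Sum>i<N. \<sigma> i * (\<rho> * a i w))"
proof -
  define hh where "hh k i w = (if i < k then \<rho> * a i w else \<phi> i (a i w))" for k i w
  define S where "S k \<sigma> = (SUP w\<in>T. \<Sum>i<N. \<sigma> i * hh k i w)" for k \<sigma>
  have hb: "\<bar>hh k i w\<bar> \<le> M + \<rho> * M" if "w \<in> T" "i < N" for k i w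
  proof -
    have "0 \<le> M" using ba[OF that] by linarith
    moreover have "\<bar>\<rho> * a i w\<bar> \<le> \<rho> * M" using ba[OF that] \<rho> by (simp add: abs_mult mult_left_mono)
    ultimately show ?thesis using bp[OF that] \<rho> unfolding hh_def by auto
  qed
  have bdd: "bdd_above ((\<lambda>w. \<Sum>i<N. \<sigma> i * hh k i w) ` T)" if "\<sigma> \<in> sigs N" for \<sigma> k
    by (rule bdd_sigs[OF that hb])
  have step: "(\<Sum>\<sigma>\<in>sigs N. S k \<sigma>) \<le> (\<Sum>\<sigma>\<in>sigs N. S (Suc k) \<sigma>)" if k: "k < N" for k
  proof -
    have pt: "S k \<sigma> + S k (flipk k \<sigma>) \<le> S (Suc k) \<sigma> + S (Suc k) (flipk k \<sigma>)"
      if \<sigma>: "\<sigma> \<in> sigs N" for \<sigma>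
    proof -
      define u where "u w = (\<Sum>i\<in>{..<N} - {k}. \<sigma> i * hh k i w)" for w
      have kin: "k \<in> {..<N}" using k by simp
      have e1: "(\<Sum>i<N. \<sigma> i * hh k i w) = u w + \<sigma> k * \<phi> k (a k w)" for w
        unfolding u_def by (subst sum.remove[OF _ kin]) (auto simp: hh_def)
      have e2: "(\<Sum>i<N. flipk k \<sigma> i * hh k i w) = u w - \<sigma> k * \<phi> k (a k w)" for w
        unfolding u_def by (subst sum.remove[OF _ kin]) (auto simp: hh_def flipk_def less_Suc_eq intro!: sum.cong)
      have e3: "(\<Sum>i<N. \<sigma> i * hh (Suc k) i w) = u w + \<sigma> k * (\<rho> * a k w)" for w
        unfolding u_def by (subst sum.remove[OF _ kin]) (auto simp: hh_def less_Suc_eq intro!: sum.cong)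
      have e4: "(\<Sum>i<N. flipk k \<sigma> i * hh (Suc k) i w) = u w - \<sigma> k * (\<rho> * a k w)" for w
        unfolding u_def by (subst sum.remove[OF _ kin]) (auto simp: hh_def flipk_def less_Suc_eq intro!: sum.cong)
      have fin: "flipk k \<sigma> \<in> sigs N" using flipk_in[OF k \<sigma>] .
      have b3: "bdd_above ((\<lambda>w. u w + \<sigma> k * (\<rho> * a k w)) ` T)"
        using bdd[OF \<sigma>, of "Suc k"] by (simp add: e3)
      have b4: "bdd_above ((\<lambda>w. u w - \<sigma> k * (\<rho> * a k w)) ` T)"
        using bdd[OF fin, of "Suc k"] by (simp add: e4)
      have "(SUP w\<in>T. u w + \<sigma> k * \<phi> k (a k w)) + (SUP w\<in>T. u w - \<sigma> k * \<phi> k (a k w))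
          \<le> (SUP w\<in>T. u w + \<sigma> k * (\<rho> * a k w)) + (SUP w\<in>T. u w - \<sigma> k * (\<rho> * a k w))"
      proof (rule sup_pair[OF T sigs_val[OF \<sigma> k] _ b3 b4])
        fix w w' assume "w \<in> T" "w' \<in> T"
        have "\<sigma> k * (\<phi> k (a k w) - \<phi> k (a k w')) \<le> \<bar>\<phi> k (a k w) - \<phi> k (a k w')\<bar>"
          using sigs_val[OF \<sigma> k] by auto
        also have "\<dots> \<le> \<rho> * \<bar>a k w - a k w'\<bar>" using lip[OF k] .
        also have "\<dots> = \<bar>\<rho> * a k w - \<rho> * a k w'\<bar>" using \<rho>
          by (simp add: abs_mult right_diff_distrib[symmetric])
        finally show "\<sigma> k * (\<phi> k (a k w) - \<phi> k (a k w')) \<le> \<bar>\<rho> * a k w - \<rho> * a k w'\<bar>" .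
      qed
      then show ?thesis unfolding S_def e1 e2 e3 e4 .
    qed
    have "(\<Sum>\<sigma>\<in>sigs N. S k \<sigma>) = ((\<Sum>\<sigma>\<in>sigs N. S k \<sigma>) + (\<Sum>\<sigma>\<in>sigs N. S k (flipk k \<sigma>))) / 2"
      using sum_flipk[OF k, of "S k"] by simp
    also have "\<dots> = (\<Sum>\<sigma>\<in>sigs N. S k \<sigma> + S k (flipk k \<sigma>)) / 2"
      by (simp add: sum.distrib)
    also have "\<dots> \<le> (\<Sum>\<sigma>\<in>sigs N. S (Suc k) \<sigma> + S (Suc k) (flipk k \<sigma>)) / 2"
      by (intro divide_right_mono sum_mono pt) auto
    also have "\<dots> = ((\<Sum>\<sigma>\<in>sigs N. S (Suc k) \<sigma>) + (\<Sum>\<sigma>\<in>sigs N. S (Suc k) (flipk k \<sigma>))) / 2"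
      by (simp add: sum.distrib)
    also have "\<dots> = (\<Sum>\<sigma>\<in>sigs N. S (Suc k) \<sigma>)"
      using sum_flipk[OF k, of "S (Suc k)"] by simp
    finally show ?thesis .
  qed
  have "k \<le> N \<Longrightarrow> (\<Sum>\<sigma>\<in>sigs N. S 0 \<sigma>) \<le> (\<Sum>\<sigma>\<in>sigs N. S k \<sigma>)" for k
  proof (induction k)
    case 0 then show ?case by simp
  next
    case (Suc k)
    then show ?case using step[of k] by simp
  qed
  from this[of N] show ?thesis
    unfolding S_def hh_def by simp
qed

definition bb :: "real^'n^'n \<Rightarrow> real^'n^'m \<Rightarrow> real^'n^'m \<Rightarrow> real" where
  "bb V W X = inner (innerH W X) (Vnormalized V)"

lemma bb_explicit: "bb V W X = (\<Sum>i\<in>UNIV. \<Sum>j\<in>UNIV. (\<Sum>k\<in>UNIV. W$k$i * X$k$j) * (Vnormalized V)$i$j)"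
  unfolding bb_def innerH_def inner_vec_def matrix_matrix_mult_def transpose_def
  by simp

lemma bb_add_right: "bb V W (X + Y) = bb V W X + bb V W Y"
  unfolding bb_explicit by (simp add: distrib_left distrib_right sum.distrib)

lemma bb_scale_right: "bb V W (c *\<^sub>R X) = c * bb V W X"
  unfolding bb_explicit by (simp add: sum_distrib_left sum_distrib_right mult_ac)

lemma bb_add_left: "bb V (X + Y) W = bb V X W + bb V Y W"
  unfolding bb_explicit by (simp add: distrib_left distrib_right sum.distrib)

lemma bb_scale_left: "bb V (c *\<^sub>R X) W = c * bb V X W"
  unfolding bb_explicit by (simp add: sum_distrib_left sum_distrib_right mult_ac)

lemma bb_zero_right[simp]: "bb V W 0 = 0"
  unfolding bb_explicit by simp

lemma bb_zero_left[simp]: "bb V 0 W = 0"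
  unfolding bb_explicit by simp

lemma bb_minus_right: "bb V W (- X) = - bb V W X"
  using bb_scale_right[of V W "-1" X] by simp

lemma bb_minus_left: "bb V (- X) W = - bb V X W"
  using bb_scale_left[of V "-1" X W] by simp

lemma bb_diff_right: "bb V W (X - Y) = bb V W X - bb V W Y"
  using bb_add_right[of V W X "- Y"] bb_minus_right[of V W Y] by simp

lemma bb_diff_left: "bb V (X - Y) W = bb V X W - bb V Y W"
  using bb_add_left[of V X "- Y" W] bb_minus_left[of V Y W] by simp

lemma bb_sum_right: "bb V W (\<Sum>i\<in>A. f i) = (\<Sum>i\<in>A. bb V W (f i))"
  by (induction A rule: infinite_finite_induct) (simp_all add: bb_add_right)

lemma bb_sum_left: "bb V (\<Sum>i\<in>A. f i) W = (\<Sum>i\<in>A. bb V (f i) W)"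
  by (induction A rule: infinite_finite_induct) (simp_all add: bb_add_left)

lemma bb_sym:
  assumes "transpose V = V"
  shows "bb V W X = bb V X W"
proof -
  have s: "(Vnormalized V)$i$j = (Vnormalized V)$j$i" for i j
  proof -
    have "V$i$j = V$j$i" using assms by (metis transpose_def vec_lambda_beta)
    then show ?thesis unfolding Vnormalized_def by simp
  qed
  show ?thesis unfolding bb_explicit
    by (subst sum.swap) (simp add: s mult_ac)
qed

lemma continuous_bb: "continuous_on UNIV (\<lambda>x. bb V (f x) (g x))" 
  if "continuous_on UNIV f" "continuous_on UNIV g"
  for f g :: "'a::topological_space \<Rightarrow> real^'n^'m"
  unfolding bb_explicit by (intro continuous_intros that)

lemma normHV_bb: "normHV V X = sqrt (bb V X X)"
  unfolding normHV_def bb_def ..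

context
  fixes V :: "real^'n^'n"
  assumes symV: "transpose V = V"
    and psd: "\<forall>X::real^'n^'m. inner (innerH X X) (Vnormalized V) \<ge> 0"
begin

lemma bb_psd: "bb V X X \<ge> 0" for X :: "real^'n^'m"
  using psd unfolding bb_def by blast

lemma bb_quad: "bb V (W + t *\<^sub>R X) (W + t *\<^sub>R X) = bb V W W + 2 * t * bb V W X + t\<^sup>2 * bb V X X"
  for W X :: "real^'n^'m"
  using bb_sym[OF symV, of W X]
  by (simp add: bb_add_left bb_add_right bb_scale_left bb_scale_right power2_eq_square algebra_simps)

lemma bb_sq_le: "(bb V W X)\<^sup>2 \<le> bb V W W * bb V X X" for W X :: "real^'n^'m"
proof -
  define p where "p = bb V W W"
  define q where "q = bb V X X"
  define r where "r = bb V W X"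
  have Q: "0 \<le> p + 2 * t * r + t\<^sup>2 * q" for t
    using bb_psd[of "W + t *\<^sub>R X"] unfolding p_def q_def r_def bb_quad .
  have q0: "q \<ge> 0" using bb_psd unfolding q_def .
  show ?thesis
  proof (cases "q = 0")
    case True
    have "r = 0"
    proof (rule ccontr)
      assume "r \<noteq> 0"
      have "0 \<le> p + 2 * (- (p + 1) / (2 * r)) * r + (- (p + 1) / (2 * r))\<^sup>2 * q" by (rule Q)
      also have "\<dots> = -1" using \<open>r \<noteq> 0\<close> True by (simp add: field_simps)
      finally show False by simp
    qed
    then show ?thesis unfolding p_def[symmetric] q_def[symmetric] r_def[symmetric] using True by simp
  next
    case False
    then have qp: "q > 0" using q0 by simp
    have "0 \<le> p + 2 * (- r / q) * r + (- r / q)\<^sup>2 * q" by (rule Q)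
    also have "\<dots> = p - r\<^sup>2 / q" using qp by (simp add: field_simps power2_eq_square)
    finally have "r\<^sup>2 / q \<le> p" by simp
    then have "r\<^sup>2 \<le> p * q" using qp by (simp add: divide_le_eq)
    then show ?thesis unfolding p_def q_def r_def .
  qed
qed

lemma bb_CS: "\<bar>bb V W X\<bar> \<le> normHV V W * normHV V X" for W X :: "real^'n^'m"
proof -
  have "\<bar>bb V W X\<bar> = sqrt ((bb V W X)\<^sup>2)" by simp
  also have "\<dots> \<le> sqrt (bb V W W * bb V X X)" using bb_sq_le by (rule real_sqrt_le_mono)
  also have "\<dots> = normHV V W * normHV V X" unfolding normHV_bb by (simp add: real_sqrt_mult)
  finally show ?thesis .
qed

lemma normHV_nonneg: "normHV V X \<ge> 0" for X :: "real^'n^'m"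
  unfolding normHV_bb using bb_psd[of X] by simp

lemma normHV_sq: "(normHV V X)\<^sup>2 = bb V X X" for X :: "real^'n^'m"
  unfolding normHV_bb using bb_psd by simp

lemma normHV_triangle: "normHV V (X + Y) \<le> normHV V X + normHV V Y" for X Y :: "real^'n^'m"
proof -
  have "(normHV V (X + Y))\<^sup>2 = bb V X X + 2 * bb V X Y + bb V Y Y"
    unfolding normHV_sq using bb_sym[OF symV, of X Y]
    by (simp add: bb_add_left bb_add_right)
  also have "\<dots> \<le> (normHV V X)\<^sup>2 + 2 * (normHV V X * normHV V Y) + (normHV V Y)\<^sup>2"
    using bb_CS[of X Y] unfolding normHV_sq by linarith
  also have "\<dots> = (normHV V X + normHV V Y)\<^sup>2" by (simp add: power2_eq_square algebra_simps)
  finally show ?thesis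
    using normHV_nonneg[of X] normHV_nonneg[of Y] by (meson power2_le_imp_le add_nonneg_nonneg)
qed

lemma normHV_minus: "normHV V (- X) = normHV V X" for X :: "real^'n^'m"
  unfolding normHV_bb by (simp add: bb_minus_left bb_minus_right)

lemma normHV_diff_commute: "normHV V (X - Y) = normHV V (Y - X)" for X Y :: "real^'n^'m"
  using normHV_minus[of "X - Y"] by simp

lemma normHV_diff_tri: "normHV V (X - Z) \<le> normHV V (X - Y) + normHV V (Y - Z)" for X Y Z :: "real^'n^'m"
  using normHV_triangle[of "X - Y" "Y - Z"] by simp

lemma continuous_normHV: "continuous_on UNIV (\<lambda>x::real^'n^'m. normHV V (x - W))"
  unfolding normHV_bb
  by (intro continuous_on_compose2[OF continuous_on_real_sqrt] continuous_bb continuous_intros) auto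

lemma rad_linear:
  fixes T :: "(real^'n^'m) set" and X :: "nat \<Rightarrow> real^'n^'m"
  assumes T: "T \<noteq> {}" and TB: "\<And>w. w \<in> T \<Longrightarrow> normHV V w \<le> B'"
    and XR: "\<And>i. i < N \<Longrightarrow> normHV V (X i) \<le> R'"
    and \<rho>: "0 \<le> \<rho>" and B: "0 \<le> B'" and R: "0 \<le> R'"
  shows "(\<Sum>\<sigma>\<in>sigs N. SUP w\<in>T. \<Sum>i<N. \<sigma> i * (\<rho> * bb V w (X i)))
       \<le> 2 ^ N * (\<rho> * B' * R' * sqrt (real N))"
proof -
  define Y where "Y \<sigma> = (\<Sum>i<N. \<sigma> i *\<^sub>R X i)" for \<sigma>
  have eq: "(\<Sum>i<N. \<sigma> i * (\<rho> * bb V w (X i))) = \<rho> * bb V w (Y \<sigma>)" for \<sigma> w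
    unfolding Y_def bb_sum_right bb_scale_right by (simp add: sum_distrib_left mult_ac)
  have supb: "(SUP w\<in>T. \<Sum>i<N. \<sigma> i * (\<rho> * bb V w (X i))) \<le> \<rho> * B' * normHV V (Y \<sigma>)" for \<sigma>
    unfolding eq
  proof (rule cSUP_least[OF T])
    fix w assume w: "w \<in> T"
    have "\<rho> * bb V w (Y \<sigma>) \<le> \<rho> * (normHV V w * normHV V (Y \<sigma>))"
      using bb_CS[of w "Y \<sigma>"] \<rho> by (intro mult_left_mono) auto
    also have "\<dots> \<le> \<rho> * (B' * normHV V (Y \<sigma>))"
      using TB[OF w] \<rho> normHV_nonneg[of "Y \<sigma>"] by (intro mult_left_mono mult_right_mono) auto
    finally show "\<rho> * bb V w (Y \<sigma>) \<le> \<rho> * B' * normHV V (Y \<sigma>)" by (simp add: mult_ac)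
  qed
  have sq: "(\<Sum>\<sigma>\<in>sigs N. (normHV V (Y \<sigma>))\<^sup>2) \<le> 2 ^ N * (real N * R'\<^sup>2)"
  proof -
    have "(\<Sum>\<sigma>\<in>sigs N. (normHV V (Y \<sigma>))\<^sup>2)
        = (\<Sum>\<sigma>\<in>sigs N. \<Sum>i<N. \<Sum>j<N. \<sigma> i * \<sigma> j * bb V (X j) (X i))"
      unfolding normHV_sq Y_def bb_sum_left bb_sum_right bb_scale_left bb_scale_right
      by (simp add: sum_distrib_left mult_ac)
    also have "\<dots> = 2 ^ N * (\<Sum>i<N. bb V (X i) (X i))" by (rule sigs_quad)
    also have "\<dots> \<le> 2 ^ N * (\<Sum>i<N. R'\<^sup>2)"
    proof (intro mult_left_mono sum_mono)
      fix i assume "i \<in> {..<N}"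
      then have "normHV V (X i) \<le> R'" using XR by simp
      then have "(normHV V (X i))\<^sup>2 \<le> R'\<^sup>2" using normHV_nonneg by (intro power_mono) auto
      then show "bb V (X i) (X i) \<le> R'\<^sup>2" unfolding normHV_sq .
    qed auto
    finally show ?thesis by simp
  qed
  have "(\<Sum>\<sigma>\<in>sigs N. normHV V (Y \<sigma>))\<^sup>2 \<le> (\<Sum>\<sigma>\<in>sigs N. (normHV V (Y \<sigma>))\<^sup>2) * card (sigs N)"
    by (rule sum_squared_le_sum_of_squares)
  also have "\<dots> \<le> 2 ^ N * (real N * R'\<^sup>2) * 2 ^ N"
    unfolding card_sigs of_nat_power of_nat_numeral using sq by (rule mult_right_mono) simp
  also have "\<dots> = (2 ^ N * R' * sqrt (real N))\<^sup>2"
  proof -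
    have "(2 ^ N * R' * sqrt (real N))\<^sup>2 = (2 ^ N)\<^sup>2 * R'\<^sup>2 * (sqrt (real N))\<^sup>2"
      by (simp only: power_mult_distrib)
    also have "\<dots> = (2 ^ N) * (2 ^ N) * R'\<^sup>2 * real N"
      by (simp only: power2_eq_square[of "2 ^ N"] real_sqrt_pow2[OF of_nat_0_le_iff])
    finally show ?thesis by (simp only: mult_ac)
  qed
  finally have S: "(\<Sum>\<sigma>\<in>sigs N. normHV V (Y \<sigma>)) \<le> 2 ^ N * R' * sqrt (real N)"
    by (rule power2_le_imp_le) (simp add: R)
  have "(\<Sum>\<sigma>\<in>sigs N. SUP w\<in>T. \<Sum>i<N. \<sigma> i * (\<rho> * bb V w (X i)))
      \<le> (\<Sum>\<sigma>\<in>sigs N. \<rho> * B' * normHV V (Y \<sigma>))"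
    by (intro sum_mono supb)
  also have "\<dots> = \<rho> * B' * (\<Sum>\<sigma>\<in>sigs N. normHV V (Y \<sigma>))" by (simp add: sum_distrib_left)
  also have "\<dots> \<le> \<rho> * B' * (2 ^ N * R' * sqrt (real N))"
    using S \<rho> B by (intro mult_left_mono) auto
  finally show ?thesis by (simp add: mult_ac)
qed

end

lemma prob_abs_integral_le:
  fixes h :: "'a \<Rightarrow> real" and K :: real
  assumes P: "prob_space M" and h: "h \<in> borel_measurable M"
    and b: "\<And>x. x \<in> space M \<Longrightarrow> \<bar>h x\<bar> \<le> K"
  shows "\<bar>\<integral>x. h x \<partial>M\<bar> \<le> K"
proof -
  interpret prob_space M by fact
  have int: "integrable M h"
    by (rule integrable_const_bound[where B=K]) (use b h in auto)
  have "\<bar>\<integral>x. h x \<partial>M\<bar> \<le> (\<integral>x. \<bar>h x\<bar> \<partial>M)" by (rule integral_abs_bound)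
  also have "\<dots> \<le> (\<integral>x. K \<partial>M)"
    by (intro integral_mono int integrable_abs) (use b in auto)
  also have "\<dots> = K" by (simp add: prob_space)
  finally show ?thesis .
qed

lemma mcdiarmid_exp:
  fixes M :: "'z measure" and f :: "(nat \<Rightarrow> 'z) \<Rightarrow> real"
  assumes M: "prob_space M"
  shows "f \<in> borel_measurable (PiM {..<n} (\<lambda>_. M)) \<Longrightarrow>
    (\<And>x. x \<in> space (PiM {..<n} (\<lambda>_. M)) \<Longrightarrow> \<bar>f x\<bar> \<le> Bd) \<Longrightarrow>
    (\<And>x i z. x \<in> space (PiM {..<n} (\<lambda>_. M)) \<Longrightarrow> i < n \<Longrightarrow> z \<in> space M \<Longrightarrow> \<bar>f x - f (x(i:=z))\<bar> \<le> c) \<Longrightarrow>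
    l > 0 \<Longrightarrow>
    (\<integral>\<^sup>+x. ennreal (exp (l * (f x - (\<integral>y. f y \<partial>PiM {..<n} (\<lambda>_. M))))) \<partial>PiM {..<n} (\<lambda>_. M))
      \<le> ennreal (exp (l\<^sup>2 * real n * c\<^sup>2 / 8))"
proof (induction n arbitrary: f)
  case 0
  let ?P = "PiM ({}::nat set) (\<lambda>_. M)"
  have sp: "space ?P = {\<lambda>_. undefined}" by (simp add: space_PiM)
  interpret Pp: prob_space ?P by (rule prob_space_PiM) (simp add: M)
  define k where "k = f (\<lambda>_. undefined)"
  have fk: "x \<in> space ?P \<Longrightarrow> f x = k" for x using sp k_def by auto
  have "(\<integral>y. f y \<partial>?P) = (\<integral>y. k \<partial>?P)" by (rule Bochner_Integration.integral_cong) (auto simp: fk)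
  then have E: "(\<integral>y. f y \<partial>?P) = k" using Pp.prob_space by simp
  have "(\<integral>\<^sup>+x. ennreal (exp (l * (f x - (\<integral>y. f y \<partial>?P)))) \<partial>?P) = (\<integral>\<^sup>+x. ennreal 1 \<partial>?P)"
    by (rule nn_integral_cong) (simp add: E fk)
  also have "\<dots> = 1" by (simp add: Pp.emeasure_space_1)
  finally show ?case by simp
next
  case (Suc n)
  have ins: "{..<Suc n} = insert n {..<n}" by auto
  let ?P = "PiM {..<n} (\<lambda>_. M)"
  let ?Q = "PiM (insert n {..<n}) (\<lambda>_. M)"
  note fm = Suc.prems(1)[unfolded ins]
  note fb = Suc.prems(2)[unfolded ins]
  note fd = Suc.prems(3)[unfolded ins]
  note l = Suc.prems(4)
  interpret PS: product_sigma_finite "\<lambda>_::nat. M"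
    by (simp add: product_sigma_finite_def prob_space_imp_sigma_finite M)
  interpret Mp: prob_space M by fact
  interpret Pp: prob_space ?P by (rule prob_space_PiM) (simp add: M)
  interpret Qp: prob_space ?Q by (rule prob_space_PiM) (simp add: M)
  have nn: "n \<notin> {..<n}" by simp
  have xupd: "x(n:=z) \<in> space ?Q" if "x \<in> space ?P" "z \<in> space M" for x z
    using measurable_space[OF measurable_component_update[OF that(1) nn] that(2)] .
  have Fm: "(\<lambda>z. f (x(n:=z))) \<in> borel_measurable M" if "x \<in> space ?P" for x
    using measurable_comp[OF measurable_component_update[OF that nn] fm] by (simp add: comp_def)
  have F2: "(\<lambda>(x, z). f (x(n:=z))) \<in> borel_measurable (?P \<Otimes>\<^sub>M M)"
  proof -
    have "(\<lambda>(x, z). f (x(n:=z))) = f \<circ> (\<lambda>(x, z). x(n:=z))" by auto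
    then show ?thesis using measurable_comp[OF measurable_add_dim[of n "{..<n}" "\<lambda>_. M"] fm] by simp
  qed
  define g where "g x = (\<integral>z. f (x(n:=z)) \<partial>M)" for x
  have gm: "g \<in> borel_measurable ?P"
    unfolding g_def using sigma_finite_measure.borel_measurable_lebesgue_integral[OF prob_space_imp_sigma_finite[OF M], of "\<lambda>x z. f (x(n:=z))" ?P] F2 by simp
  have gb: "\<bar>g x\<bar> \<le> Bd" if "x \<in> space ?P" for x
    unfolding g_def by (rule prob_abs_integral_le[OF M Fm[OF that]]) (use fb xupd that in auto)
  have gd: "\<bar>g x - g (x(i:=z'))\<bar> \<le> c" if x: "x \<in> space ?P" and i: "i < n" and z': "z' \<in> space M" for x i z'
  proof -
    have x': "x(i:=z') \<in> space ?P" using x i z' by (auto simp: space_PiM PiE_iff extensional_def)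
    have "g x - g (x(i:=z')) = (\<integral>z. (f (x(n:=z)) - f (x(i:=z', n:=z))) \<partial>M)"
      unfolding g_def
      by (rule Bochner_Integration.integral_diff[symmetric];
          rule Mp.integrable_const_bound[where B=Bd]) (use fb xupd x x' Fm in auto)
    also have "\<bar>\<dots>\<bar> \<le> c"
    proof (rule prob_abs_integral_le[OF M])
      show "(\<lambda>z. f (x(n:=z)) - f (x(i:=z', n:=z))) \<in> borel_measurable M"
        using Fm[OF x] Fm[OF x'] by measurable
      fix z assume z: "z \<in> space M"
      have eq: "x(i:=z', n:=z) = x(n:=z, i:=z')" using i by (auto simp: fun_upd_twist)
      have "\<bar>f (x(n:=z)) - f (x(n:=z, i:=z'))\<bar> \<le> c"
        by (rule fd[OF xupd[OF x z]]) (use i z' in auto)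
      then show "\<bar>f (x(n:=z)) - f (x(i:=z', n:=z))\<bar> \<le> c"
        by (simp only: eq)
    qed
    finally show ?thesis .
  qed
  have IH: "(\<integral>\<^sup>+x. ennreal (exp (l * (g x - (\<integral>y. g y \<partial>?P)))) \<partial>?P) \<le> ennreal (exp (l\<^sup>2 * real n * c\<^sup>2 / 8))"
    by (rule Suc.IH[OF gm gb gd l])
  have fint: "integrable ?Q f"
    by (rule Qp.integrable_const_bound[where B=Bd]) (use fb fm in auto)
  have Ef: "(\<integral>y. f y \<partial>?Q) = (\<integral>y. g y \<partial>?P)"
    unfolding g_def by (rule PS.product_integral_insert[OF _ nn fint]) simp
  define E where "E = (\<integral>y. g y \<partial>?P)"
  have inner: "(\<integral>\<^sup>+z. ennreal (exp (l * (f (x(n:=z)) - E))) \<partial>M)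
      \<le> ennreal (exp (l * (g x - E))) * ennreal (exp (l\<^sup>2 * c\<^sup>2 / 8))" if x: "x \<in> space ?P" for x
  proof -
    define F where "F z = f (x(n:=z))" for z
    have Fm': "F \<in> borel_measurable M" unfolding F_def using Fm[OF x] .
    define a where "a = (INF z\<in>space M. F z)"
    have ne: "space M \<noteq> {}" by (rule Mp.not_empty)
    have bdd: "bdd_below (F ` space M)"
    proof (rule bdd_belowI2[where m="-Bd"])
      fix z assume "z \<in> space M"
      then have "\<bar>f (x(n:=z))\<bar> \<le> Bd" using fb xupd x by blast
      then show "-Bd \<le> F z" unfolding F_def by linarith
    qed
    have alo: "a \<le> F z" if "z \<in> space M" for z
      unfolding a_def using bdd that by (rule cINF_lower)
    have ahi: "F z \<le> a + c" if z: "z \<in> space M" for z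
    proof -
      have "F z - c \<le> a" unfolding a_def
      proof (rule cINF_greatest[OF ne])
        fix z' assume z': "z' \<in> space M"
        have eq: "x(n:=z', n:=z) = x(n:=z)" by simp
        have "\<bar>f (x(n:=z')) - f (x(n:=z', n:=z))\<bar> \<le> c"
          by (rule fd[OF xupd[OF x z']]) (use z in auto)
        then have "\<bar>F z' - F z\<bar> \<le> c" unfolding F_def by (simp only: eq)
        then show "F z - c \<le> F z'" by simp
      qed
      then show ?thesis by simp
    qed
    interpret H: interval_bounded_random_variable M F a "a + c"
      by unfold_locales (use Fm' alo ahi in auto)
    have EF: "(\<integral>z. F z \<partial>M) = g x" unfolding g_def F_def ..
    have hl: "(\<integral>\<^sup>+z. ennreal (exp (l * (F z - g x))) \<partial>M) \<le> ennreal (exp (l\<^sup>2 * c\<^sup>2 / 8))"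
      using H.Hoeffdings_lemma_nn_integral[OF l] unfolding EF by simp
    have "(\<integral>\<^sup>+z. ennreal (exp (l * (f (x(n:=z)) - E))) \<partial>M)
        = (\<integral>\<^sup>+z. ennreal (exp (l * (g x - E))) * ennreal (exp (l * (F z - g x))) \<partial>M)"
    proof (rule nn_integral_cong)
      fix z
      have "exp (l * (f (x(n:=z)) - E)) = exp (l * (g x - E)) * exp (l * (F z - g x))"
        unfolding exp_add[symmetric] F_def by (simp add: algebra_simps)
      then show "ennreal (exp (l * (f (x(n:=z)) - E))) = ennreal (exp (l * (g x - E))) * ennreal (exp (l * (F z - g x)))"
        by (simp add: ennreal_mult)
    qed
    also have "\<dots> = ennreal (exp (l * (g x - E))) * (\<integral>\<^sup>+z. ennreal (exp (l * (F z - g x))) \<partial>M)"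
      by (rule nn_integral_cmult) (use Fm' in measurable)
    also have "\<dots> \<le> ennreal (exp (l * (g x - E))) * ennreal (exp (l\<^sup>2 * c\<^sup>2 / 8))"
      by (rule mult_left_mono[OF hl]) simp
    finally show ?thesis .
  qed
  have "(\<integral>\<^sup>+x. ennreal (exp (l * (f x - (\<integral>y. f y \<partial>?Q)))) \<partial>?Q)
      = (\<integral>\<^sup>+x. (\<integral>\<^sup>+z. ennreal (exp (l * (f (x(n:=z)) - E))) \<partial>M) \<partial>?P)"
    unfolding Ef E_def[symmetric] by (rule PS.product_nn_integral_insert[OF _ nn]) (use fm in measurable)
  also have "\<dots> \<le> (\<integral>\<^sup>+x. ennreal (exp (l * (g x - E))) * ennreal (exp (l\<^sup>2 * c\<^sup>2 / 8)) \<partial>?P)"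
    by (rule nn_integral_mono) (rule inner)
  also have "\<dots> = (\<integral>\<^sup>+x. ennreal (exp (l * (g x - E))) \<partial>?P) * ennreal (exp (l\<^sup>2 * c\<^sup>2 / 8))"
    by (rule nn_integral_multc) (use gm in measurable)
  also have "\<dots> \<le> ennreal (exp (l\<^sup>2 * real n * c\<^sup>2 / 8)) * ennreal (exp (l\<^sup>2 * c\<^sup>2 / 8))"
    by (rule mult_right_mono[OF IH[folded E_def]]) simp
  also have "\<dots> = ennreal (exp (l\<^sup>2 * real (Suc n) * c\<^sup>2 / 8))"
  proof -
    have "exp (l\<^sup>2 * real n * c\<^sup>2 / 8) * exp (l\<^sup>2 * c\<^sup>2 / 8) = exp (l\<^sup>2 * real (Suc n) * c\<^sup>2 / 8)"
      unfolding exp_add[symmetric] by (simp add: algebra_simps add_divide_distrib)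
    then show ?thesis by (simp add: ennreal_mult[symmetric])
  qed
  finally show ?case unfolding ins .
qed

lemma mcdiarmid:
  fixes M :: "'z measure" and f :: "(nat \<Rightarrow> 'z) \<Rightarrow> real"
  assumes M: "prob_space M"
    and fm: "f \<in> borel_measurable (PiM {..<n} (\<lambda>_. M))"
    and fb: "\<And>x. x \<in> space (PiM {..<n} (\<lambda>_. M)) \<Longrightarrow> \<bar>f x\<bar> \<le> Bd"
    and fd: "\<And>x i z. x \<in> space (PiM {..<n} (\<lambda>_. M)) \<Longrightarrow> i < n \<Longrightarrow> z \<in> space M \<Longrightarrow> \<bar>f x - f (x(i:=z))\<bar> \<le> c"
    and t: "t > 0" and c: "c > 0" and n: "n > 0"
  shows "measure (PiM {..<n} (\<lambda>_. M)) {x \<in> space (PiM {..<n} (\<lambda>_. M)). f x - (\<integral>y. f y \<partial>PiM {..<n} (\<lambda>_. M)) \<ge> t}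
      \<le> exp (-2 * t\<^sup>2 / (real n * c\<^sup>2))"
proof -
  let ?P = "PiM {..<n} (\<lambda>_. M)"
  interpret Pp: prob_space ?P by (rule prob_space_PiM) (simp add: M)
  define E where "E = (\<integral>y. f y \<partial>?P)"
  define d where "d = real n * c\<^sup>2"
  have d: "d > 0" using c n by (simp add: d_def)
  define l where "l = 4 * t / d"
  have l: "l > 0" using t d by (simp add: l_def)
  have "ennreal (measure ?P {x \<in> space ?P. f x - E \<ge> t}) = emeasure ?P {x \<in> space ?P. f x - E \<ge> t}"
    by (simp add: Pp.emeasure_eq_measure)
  also have "\<dots> \<le> ennreal (exp (-l * t)) * (\<integral>\<^sup>+x. ennreal (exp (l * (f x - E))) * indicator (space ?P) x \<partial>?P)"
    by (rule Chernoff_ineq_nn_integral_ge[OF l]) (use fm in auto)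
  also have "(\<integral>\<^sup>+x. ennreal (exp (l * (f x - E))) * indicator (space ?P) x \<partial>?P) = (\<integral>\<^sup>+x. ennreal (exp (l * (f x - E))) \<partial>?P)"
    by (rule nn_integral_cong) simp
  also have "ennreal (exp (-l * t)) * \<dots> \<le> ennreal (exp (-l * t)) * ennreal (exp (l\<^sup>2 * real n * c\<^sup>2 / 8))"
  proof (rule mult_left_mono)
    show "(\<integral>\<^sup>+x. ennreal (exp (l * (f x - E))) \<partial>?P) \<le> ennreal (exp (l\<^sup>2 * real n * c\<^sup>2 / 8))"
      unfolding E_def by (rule mcdiarmid_exp[OF M fm]) (use fb fd l in auto)
  qed (rule zero_le)
  also have "\<dots> = ennreal (exp (-l * t) * exp (l\<^sup>2 * real n * c\<^sup>2 / 8))" by (simp add: ennreal_mult)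
  also have "exp (-l * t) * exp (l\<^sup>2 * real n * c\<^sup>2 / 8) = exp (-2 * t\<^sup>2 / d)"
  proof -
    have "-l * t + l\<^sup>2 * real n * c\<^sup>2 / 8 = -2 * t\<^sup>2 / d"
      using d unfolding l_def d_def by (simp add: field_simps power2_eq_square)
    then show ?thesis by (simp flip: exp_add)
  qed
  finally show ?thesis unfolding E_def d_def by (subst (asm) ennreal_le_iff) auto
qed

lemma sup_abs_le:
  fixes f :: "'w \<Rightarrow> real"
  assumes "C \<noteq> {}" "\<And>w. w \<in> C \<Longrightarrow> \<bar>f w\<bar> \<le> K"
  shows "\<bar>SUP w\<in>C. f w\<bar> \<le> K"
proof -
  have bdd: "bdd_above (f ` C)" by (rule bdd_aboveI2[where M=K]) (use assms(2) in force)
  obtain w0 where w0: "w0 \<in> C" using assms(1) by blast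
  have "(SUP w\<in>C. f w) \<le> K" by (rule cSUP_least[OF assms(1)]) (use assms(2) in force)
  moreover have "f w0 \<le> (SUP w\<in>C. f w)" by (rule cSUP_upper[OF w0 bdd])
  moreover have "-K \<le> f w0" using assms(2)[OF w0] by linarith
  ultimately show ?thesis by linarith
qed

lemma bdd_of_abs:
  fixes f :: "'w \<Rightarrow> real"
  assumes "\<And>w. w \<in> C \<Longrightarrow> \<bar>f w\<bar> \<le> K"
  shows "bdd_above (f ` C)"
  by (rule bdd_aboveI2[where M=K]) (use assms in force)

lemma sum_abs_bound:
  fixes g :: "nat \<Rightarrow> real"
  assumes "\<And>i. i < N \<Longrightarrow> \<bar>g i\<bar> \<le> K"
  shows "\<bar>\<Sum>i<N. g i\<bar> \<le> real N * K"
proof -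
  have "\<bar>\<Sum>i<N. g i\<bar> \<le> (\<Sum>i<N. \<bar>g i\<bar>)" by (rule sum_abs)
  also have "\<dots> \<le> (\<Sum>i<N. K)" by (intro sum_mono) (use assms in auto)
  finally show ?thesis by simp
qed

definition perm_sig :: "nat \<Rightarrow> (nat \<Rightarrow> real) \<Rightarrow> nat \<Rightarrow> nat" where
  "perm_sig N \<sigma> j = (if j < N \<and> \<sigma> j = -1 then j + N
      else if N \<le> j \<and> j < N + N \<and> \<sigma> (j - N) = -1 then j - N else j)"

lemma perm_sig_range: "j < N + N \<Longrightarrow> perm_sig N \<sigma> j < N + N"
  unfolding perm_sig_def by auto

lemma perm_sig_invol: "j < N + N \<Longrightarrow> perm_sig N \<sigma> (perm_sig N \<sigma> j) = j"
  unfolding perm_sig_def by auto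

lemma perm_sig_inj: "inj_on (perm_sig N \<sigma>) {..<N+N}"
  by (rule inj_on_inverseI[where g="perm_sig N \<sigma>"]) (simp add: perm_sig_invol)

lemma reindex_integral:
  fixes F :: "(nat \<Rightarrow> 'z) \<Rightarrow> real"
  assumes D: "prob_space D"
    and Fm: "F \<in> borel_measurable (PiM {..<N+N} (\<lambda>_. D))"
  shows "(\<integral>\<omega>. F \<omega> \<partial>PiM {..<N+N} (\<lambda>_. D))
       = (\<integral>\<omega>. F (\<lambda>n\<in>{..<N+N}. \<omega> (perm_sig N \<sigma> n)) \<partial>PiM {..<N+N} (\<lambda>_. D))"
proof -
  let ?P = "PiM {..<N+N} (\<lambda>_. D)"
  let ?T = "\<lambda>\<omega>. \<lambda>n\<in>{..<N+N}. \<omega> (perm_sig N \<sigma> n)"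
  have Tm: "?T \<in> measurable ?P ?P"
    by (rule measurable_restrict) (auto intro!: measurable_component_singleton perm_sig_range)
  have "distr ?P (PiM {..<N+N} (\<lambda>i. (\<lambda>_. D) (perm_sig N \<sigma> i))) ?T = (PiM {..<N+N} (\<lambda>i. (\<lambda>_. D) (perm_sig N \<sigma> i)))"
    by (rule distr_PiM_reindex) (auto simp: D perm_sig_inj perm_sig_range)
  then have dis: "distr ?P ?P ?T = ?P" by simp
  have "(\<integral>\<omega>. F \<omega> \<partial>?P) = (\<integral>\<omega>. F \<omega> \<partial>distr ?P ?P ?T)" by (simp only: dis)
  also have "\<dots> = (\<integral>\<omega>. F (?T \<omega>) \<partial>?P)" by (rule integral_distr[OF Tm Fm])
  finally show ?thesis .
qed

lemma comp_meas:
  fixes g :: "'z \<Rightarrow> real"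
  assumes "i \<in> I" "g \<in> borel_measurable D"
  shows "(\<lambda>\<omega>. g (\<omega> i)) \<in> borel_measurable (PiM I (\<lambda>_. D))"
  using measurable_compose[OF measurable_component_singleton[OF assms(1)] assms(2)] by simp

lemma space_PiM_comp: "\<omega> \<in> space (PiM I (\<lambda>_. D)) \<Longrightarrow> i \<in> I \<Longrightarrow> \<omega> i \<in> space D"
  by (auto simp: space_PiM PiE_iff)

lemma symmetrization:
  fixes D :: "'z measure" and h :: "'w \<Rightarrow> 'z \<Rightarrow> real" and C :: "'w set"
  assumes D: "prob_space D" and C: "countable C" "C \<noteq> {}"
    and hm: "\<And>w. w \<in> C \<Longrightarrow> h w \<in> borel_measurable D"
    and hb: "\<And>w z. w \<in> C \<Longrightarrow> z \<in> space D \<Longrightarrow> \<bar>h w z\<bar> \<le> c"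
    and Rb: "\<And>S s. (\<And>i. i < N \<Longrightarrow> S i \<in> space D) \<Longrightarrow> s = -1 \<or> s = 1 \<Longrightarrow>
        (\<Sum>\<sigma>\<in>sigs N. SUP w\<in>C. \<Sum>i<N. \<sigma> i * (s * h w (S i))) \<le> 2 ^ N * Rc"
  shows "(\<integral>S. (SUP w\<in>C. \<Sum>i<N. ((\<integral>z. h w z \<partial>D) - h w (S i))) \<partial>PiM {..<N} (\<lambda>_. D)) \<le> 2 * Rc"
proof -
  let ?I = "{..<N}" and ?J = "{N..<N+N}"
  have IJ: "?I \<inter> ?J = {}" and IJU: "?I \<union> ?J = {..<N+N}" by auto
  let ?PI = "PiM ?I (\<lambda>_. D)" and ?PJ = "PiM ?J (\<lambda>_. D)" and ?P = "PiM {..<N+N} (\<lambda>_. D)"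
  interpret PS: product_sigma_finite "\<lambda>_::nat. D"
    by (simp add: product_sigma_finite_def prob_space_imp_sigma_finite D)
  interpret Dp: prob_space D by fact
  interpret PIp: prob_space ?PI by (rule prob_space_PiM) (simp add: D)
  interpret PJp: prob_space ?PJ by (rule prob_space_PiM) (simp add: D)
  interpret Pp: prob_space ?P by (rule prob_space_PiM) (simp add: D)
  have c0: "0 \<le> c" using hb[of "SOME w. w \<in> C" "SOME z. z \<in> space D"] C(2) Dp.not_empty
    by (metis abs_ge_zero order_trans some_in_eq)
  define LD where "LD w = (\<integral>z. h w z \<partial>D)" for w
  define H where "H \<omega> = (SUP w\<in>C. \<Sum>i<N. (h w (\<omega> (N+i)) - h w (\<omega> i)))" for \<omega>
  define Hs where "Hs \<sigma> \<omega> = (SUP w\<in>C. \<Sum>i<N. \<sigma> i * (h w (\<omega> (N+i)) - h w (\<omega> i)))" for \<sigma> \<omega>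
  define G where "G S = (SUP w\<in>C. \<Sum>i<N. (LD w - h w (S i)))" for S
  have hb2: "\<bar>s * (h w z - h w z')\<bar> \<le> 2 * c" if "w \<in> C" "z \<in> space D" "z' \<in> space D" "s = -1 \<or> s = 1" for s w z z'
    using hb[OF that(1,2)] hb[OF that(1,3)] that(4) by auto
  have Hsb: "\<bar>\<Sum>i<N. \<sigma> i * (h w (\<omega> (N+i)) - h w (\<omega> i))\<bar> \<le> real N * (2 * c)"
    if "\<omega> \<in> space ?P" "w \<in> C" "\<sigma> \<in> sigs N" for \<sigma> \<omega> w
    by (rule sum_abs_bound, rule hb2) (use that sigs_val[OF that(3)] in \<open>auto intro: space_PiM_comp\<close>)
  have Hsm: "Hs \<sigma> \<in> borel_measurable ?P" if \<sigma>: "\<sigma> \<in> sigs N" for \<sigma>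
    unfolding Hs_def
  proof (rule borel_measurable_cSUP[OF C(1)])
    fix w assume w: "w \<in> C"
    show "(\<lambda>\<omega>. \<Sum>i<N. \<sigma> i * (h w (\<omega> (N+i)) - h w (\<omega> i))) \<in> borel_measurable ?P"
      by (intro borel_measurable_sum borel_measurable_times borel_measurable_diff borel_measurable_const
            comp_meas hm[OF w]) auto
  next
    fix \<omega> assume "\<omega> \<in> space ?P"
    then show "bdd_above ((\<lambda>w. \<Sum>i<N. \<sigma> i * (h w (\<omega> (N+i)) - h w (\<omega> i))) ` C)"
      using Hsb \<sigma> by (intro bdd_of_abs) blast
  qed
  have Hsabs: "\<bar>Hs \<sigma> \<omega>\<bar> \<le> real N * (2 * c)" if "\<omega> \<in> space ?P" "\<sigma> \<in> sigs N" for \<sigma> \<omega>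
    unfolding Hs_def by (rule sup_abs_le[OF C(2)]) (use Hsb that in blast)
  have Hsint: "integrable ?P (Hs \<sigma>)" if "\<sigma> \<in> sigs N" for \<sigma>
    by (rule Pp.integrable_const_bound[where B="real N * (2 * c)"]) (use Hsabs Hsm that in auto)
  define \<sigma>1 :: "nat \<Rightarrow> real" where "\<sigma>1 = (\<lambda>i\<in>{..<N}. 1)"
  have \<sigma>1: "\<sigma>1 \<in> sigs N" unfolding \<sigma>1_def sigs_def by auto
  have H_eq: "H = Hs \<sigma>1" unfolding H_def Hs_def \<sigma>1_def by (intro ext SUP_cong refl sum.cong) auto
  have swap: "(\<integral>\<omega>. H \<omega> \<partial>?P) = (\<integral>\<omega>. Hs \<sigma> \<omega> \<partial>?P)" if \<sigma>: "\<sigma> \<in> sigs N" for \<sigma>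
  proof -
    have "(\<integral>\<omega>. H \<omega> \<partial>?P) = (\<integral>\<omega>. H (\<lambda>n\<in>{..<N+N}. \<omega> (perm_sig N \<sigma> n)) \<partial>?P)"
      unfolding H_eq by (rule reindex_integral[OF D Hsm[OF \<sigma>1]])
    also have "\<dots> = (\<integral>\<omega>. Hs \<sigma> \<omega> \<partial>?P)"
    proof (rule Bochner_Integration.integral_cong[OF refl])
      fix \<omega>
      show "H (\<lambda>n\<in>{..<N+N}. \<omega> (perm_sig N \<sigma> n)) = Hs \<sigma> \<omega>"
        unfolding H_def Hs_def
      proof (intro SUP_cong refl sum.cong)
        fix w i assume "i \<in> {..<N}"
        then have i: "i < N" by simp
        have p1: "perm_sig N \<sigma> (N+i) = (if \<sigma> i = -1 then i else N+i)"
          and p2: "perm_sig N \<sigma> i = (if \<sigma> i = -1 then N+i else i)"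
          using i by (auto simp: perm_sig_def)
        show "h w ((\<lambda>n\<in>{..<N+N}. \<omega> (perm_sig N \<sigma> n)) (N+i)) - h w ((\<lambda>n\<in>{..<N+N}. \<omega> (perm_sig N \<sigma> n)) i)
            = \<sigma> i * (h w (\<omega> (N+i)) - h w (\<omega> i))"
          using i sigs_val[OF \<sigma> i] by (auto simp: p1 p2)
      qed
    qed
    finally show ?thesis .
  qed
  have pt: "(\<Sum>\<sigma>\<in>sigs N. Hs \<sigma> \<omega>) \<le> 2 ^ N * (2 * Rc)" if \<omega>: "\<omega> \<in> space ?P" for \<omega>
  proof -
    define A where "A \<sigma> = (SUP w\<in>C. \<Sum>i<N. \<sigma> i * (1 * h w (\<omega> (N+i))))" for \<sigma>
    define B where "B \<sigma> = (SUP w\<in>C. \<Sum>i<N. \<sigma> i * (-1 * h w (\<omega> i)))" for \<sigma>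
    have sp1: "\<omega> (N+i) \<in> space D" "\<omega> i \<in> space D" if "i < N" for i
      using that \<omega> by (auto intro: space_PiM_comp)
    have "Hs \<sigma> \<omega> \<le> A \<sigma> + B \<sigma>" if \<sigma>: "\<sigma> \<in> sigs N" for \<sigma>
      unfolding Hs_def
    proof (rule cSUP_least[OF C(2)])
      fix w assume w: "w \<in> C"
      have bA: "bdd_above ((\<lambda>w. \<Sum>i<N. \<sigma> i * (1 * h w (\<omega> (N+i)))) ` C)"
        by (rule bdd_sigs[OF \<sigma>, where K=c]) (use hb sp1 in auto)
      have bB: "bdd_above ((\<lambda>w. \<Sum>i<N. \<sigma> i * (-1 * h w (\<omega> i))) ` C)"
        by (rule bdd_sigs[OF \<sigma>, where K=c]) (use hb sp1 in auto)
      have "(\<Sum>i<N. \<sigma> i * (h w (\<omega> (N+i)) - h w (\<omega> i)))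
          = (\<Sum>i<N. \<sigma> i * (1 * h w (\<omega> (N+i)))) + (\<Sum>i<N. \<sigma> i * (-1 * h w (\<omega> i)))"
        by (simp add: sum.distrib[symmetric] algebra_simps)
      also have "\<dots> \<le> A \<sigma> + B \<sigma>" unfolding A_def B_def
        by (intro add_mono cSUP_upper w bA bB)
      finally show "(\<Sum>i<N. \<sigma> i * (h w (\<omega> (N+i)) - h w (\<omega> i))) \<le> A \<sigma> + B \<sigma>" .
    qed
    then have "(\<Sum>\<sigma>\<in>sigs N. Hs \<sigma> \<omega>) \<le> (\<Sum>\<sigma>\<in>sigs N. A \<sigma>) + (\<Sum>\<sigma>\<in>sigs N. B \<sigma>)"
      by (simp add: sum.distrib[symmetric] sum_mono)
    also have "\<dots> \<le> 2 ^ N * Rc + 2 ^ N * Rc"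
      unfolding A_def B_def by (intro add_mono Rb) (use sp1 in auto)
    finally show ?thesis by (simp add: mult_ac)
  qed
  have "2 ^ N * (\<integral>\<omega>. H \<omega> \<partial>?P) = (\<Sum>\<sigma>\<in>sigs N. (\<integral>\<omega>. Hs \<sigma> \<omega> \<partial>?P))"
  proof -
    have "(\<Sum>\<sigma>\<in>sigs N. (\<integral>\<omega>. Hs \<sigma> \<omega> \<partial>?P)) = (\<Sum>\<sigma>\<in>sigs N. (\<integral>\<omega>. H \<omega> \<partial>?P))"
      by (rule sum.cong[OF refl]) (simp add: swap)
    then show ?thesis by (simp add: card_sigs)
  qed
  also have "\<dots> = (\<integral>\<omega>. (\<Sum>\<sigma>\<in>sigs N. Hs \<sigma> \<omega>) \<partial>?P)"
    by (rule Bochner_Integration.integral_sum[symmetric]) (use Hsint in auto)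
  also have "\<dots> \<le> (\<integral>\<omega>. 2 ^ N * (2 * Rc) \<partial>?P)"
    by (intro integral_mono Bochner_Integration.integrable_sum Hsint) (use pt in auto)
  also have "\<dots> = 2 ^ N * (2 * Rc)" by (simp add: Pp.prob_space)
  finally have Hle: "(\<integral>\<omega>. H \<omega> \<partial>?P) \<le> 2 * Rc" by simp
  \<comment> \<open>step 1: ghost sample\<close>
  define Hx where "Hx x y = (SUP w\<in>C. \<Sum>i<N. (h w (y (N+i)) - h w (x i)))" for x y :: "nat \<Rightarrow> 'z"
  have Hmerge: "H (merge ?I ?J (x, y)) = Hx x y" for x y
    unfolding H_def Hx_def by (intro SUP_cong refl sum.cong) (auto simp: merge_def)
  have Hint: "integrable ?P H" unfolding H_eq by (rule Hsint[OF \<sigma>1])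
  have fold: "(\<integral>\<omega>. H \<omega> \<partial>?P) = (\<integral>x. (\<integral>y. Hx x y \<partial>?PJ) \<partial>?PI)"
    using PS.product_integral_fold[OF IJ _ _ Hint[folded IJU]] by (simp add: IJU Hmerge)
  have Hxb: "\<bar>\<Sum>i<N. (h w (y (N+i)) - h w (x i))\<bar> \<le> real N * (2 * c)"
    if "\<And>i. i < N \<Longrightarrow> x i \<in> space D" "\<And>i. i < N \<Longrightarrow> y (N+i) \<in> space D" "w \<in> C" for x y w
    by (rule sum_abs_bound) (use hb2[of w _ _ 1] that in auto)
  have Hxabs: "\<bar>Hx x y\<bar> \<le> real N * (2 * c)"
    if "\<And>i. i < N \<Longrightarrow> x i \<in> space D" "\<And>i. i < N \<Longrightarrow> y (N+i) \<in> space D" for x y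
    unfolding Hx_def by (rule sup_abs_le[OF C(2)]) (use Hxb that in blast)
  have Hx2m: "(\<lambda>(x, y). Hx x y) \<in> borel_measurable (?PI \<Otimes>\<^sub>M ?PJ)"
  proof -
    have "(\<lambda>p. Hx (fst p) (snd p)) \<in> borel_measurable (?PI \<Otimes>\<^sub>M ?PJ)"
      unfolding Hx_def
    proof (rule borel_measurable_cSUP[OF C(1)])
      fix w assume w: "w \<in> C"
      have m1: "(\<lambda>p. h w (snd p (N+i))) \<in> borel_measurable (?PI \<Otimes>\<^sub>M ?PJ)" if "i < N" for i
        using measurable_compose[OF measurable_snd comp_meas[of "N+i" ?J "h w" D]] hm[OF w] that by auto
      have m2: "(\<lambda>p. h w (fst p i)) \<in> borel_measurable (?PI \<Otimes>\<^sub>M ?PJ)" if "i < N" for i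
        using measurable_compose[OF measurable_fst comp_meas[of i ?I "h w" D]] hm[OF w] that by auto
      show "(\<lambda>p. \<Sum>i<N. (h w (snd p (N+i)) - h w (fst p i))) \<in> borel_measurable (?PI \<Otimes>\<^sub>M ?PJ)"
        by (intro borel_measurable_sum borel_measurable_diff m1 m2) auto
    next
      fix p assume p: "p \<in> space (?PI \<Otimes>\<^sub>M ?PJ)"
      then have "fst p \<in> space ?PI" "snd p \<in> space ?PJ" by (auto simp: space_pair_measure)
      then have "\<And>i. i < N \<Longrightarrow> fst p i \<in> space D" "\<And>i. i < N \<Longrightarrow> snd p (N+i) \<in> space D"
        by (auto intro: space_PiM_comp)
      then show "bdd_above ((\<lambda>w. \<Sum>i<N. (h w (snd p (N+i)) - h w (fst p i))) ` C)"
        using Hxb by (intro bdd_of_abs) blast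
    qed
    then show ?thesis by (simp add: case_prod_beta')
  qed
  have Hxm: "Hx x \<in> borel_measurable ?PJ" if "x \<in> space ?PI" for x
    using measurable_Pair2[OF Hx2m that] by simp
  have Hxint: "integrable ?PJ (Hx x)" if x: "x \<in> space ?PI" for x
  proof (rule PJp.integrable_const_bound[where B="real N * (2 * c)"])
    show "AE y in ?PJ. norm (Hx x y) \<le> real N * (2 * c)"
    proof (rule AE_I2)
      fix y assume "y \<in> space ?PJ"
      then show "norm (Hx x y) \<le> real N * (2 * c)" using x by (auto intro!: Hxabs intro: space_PiM_comp)
    qed
  qed (rule Hxm[OF x])
  have comp: "(\<integral>y. h w (y (N+i)) \<partial>?PJ) = LD w" if w: "w \<in> C" and i: "i < N" for w i
  proof -
    have "distr ?PJ D (\<lambda>\<omega>. \<omega> (N+i)) = D"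
      by (rule distr_PiM_component) (use D i in auto)
    then have "LD w = (\<integral>z. h w z \<partial>distr ?PJ D (\<lambda>\<omega>. \<omega> (N+i)))" unfolding LD_def by simp
    also have "\<dots> = (\<integral>y. h w (y (N+i)) \<partial>?PJ)"
      by (rule integral_distr) (use hm[OF w] i in auto)
    finally show ?thesis by simp
  qed
  have Gle: "G x \<le> (\<integral>y. Hx x y \<partial>?PJ)" if x: "x \<in> space ?PI" for x
    unfolding G_def
  proof (rule cSUP_least[OF C(2)])
    fix w assume w: "w \<in> C"
    have xs: "x i \<in> space D" if "i < N" for i using x that by (auto intro: space_PiM_comp)
    have yint: "integrable ?PJ (\<lambda>y. h w (y (N+i)))" if "i < N" for i
    proof (rule PJp.integrable_const_bound[where B=c])
      show "AE y in ?PJ. norm (h w (y (N+i))) \<le> c"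
      proof (rule AE_I2)
        fix y assume "y \<in> space ?PJ"
        then have "y (N+i) \<in> space D" using that by (auto intro: space_PiM_comp)
        then show "norm (h w (y (N+i))) \<le> c" using hb[OF w] by simp
      qed
      show "(\<lambda>y. h w (y (N+i))) \<in> borel_measurable ?PJ"
        by (rule comp_meas) (use that hm[OF w] in auto)
    qed
    have "(\<Sum>i<N. (LD w - h w (x i))) = (\<Sum>i<N. (\<integral>y. (h w (y (N+i)) - h w (x i)) \<partial>?PJ))"
      by (intro sum.cong refl) (simp add: comp[OF w] Bochner_Integration.integral_diff yint PJp.prob_space)
    also have "\<dots> = (\<integral>y. (\<Sum>i<N. (h w (y (N+i)) - h w (x i))) \<partial>?PJ)"
      by (rule Bochner_Integration.integral_sum[symmetric]) (use yint in auto)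
    also have "\<dots> \<le> (\<integral>y. Hx x y \<partial>?PJ)"
    proof (rule integral_mono)
      show "integrable ?PJ (\<lambda>y. \<Sum>i<N. (h w (y (N+i)) - h w (x i)))"
        by (intro Bochner_Integration.integrable_sum Bochner_Integration.integrable_diff yint) auto
      show "integrable ?PJ (Hx x)" by (rule Hxint[OF x])
      fix y assume y: "y \<in> space ?PJ"
      then have ys: "\<And>i. i < N \<Longrightarrow> y (N+i) \<in> space D" by (auto intro: space_PiM_comp)
      show "(\<Sum>i<N. (h w (y (N+i)) - h w (x i))) \<le> Hx x y"
        unfolding Hx_def by (rule cSUP_upper[OF w], rule bdd_of_abs) (use Hxb xs ys in blast)
    qed
    finally show "(\<Sum>i<N. (LD w - h w (x i))) \<le> (\<integral>y. Hx x y \<partial>?PJ)" .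
  qed
  have Gm: "G \<in> borel_measurable ?PI"
    unfolding G_def
  proof (rule borel_measurable_cSUP[OF C(1)])
    fix w assume w: "w \<in> C"
    show "(\<lambda>x. \<Sum>i<N. (LD w - h w (x i))) \<in> borel_measurable ?PI"
      by (intro borel_measurable_sum borel_measurable_diff borel_measurable_const comp_meas hm[OF w]) auto
  next
    fix x assume x: "x \<in> space ?PI"
    show "bdd_above ((\<lambda>w. \<Sum>i<N. (LD w - h w (x i))) ` C)"
    proof (rule bdd_of_abs)
      fix w assume w: "w \<in> C"
      have "\<bar>LD w\<bar> \<le> c" unfolding LD_def by (rule prob_abs_integral_le[OF D hm[OF w]]) (use hb w in auto)
      then show "\<bar>\<Sum>i<N. (LD w - h w (x i))\<bar> \<le> real N * (2 * c)"
        by (intro sum_abs_bound) (use hb[OF w] x in \<open>force intro: space_PiM_comp\<close>)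
    qed
  qed
  have Gint: "integrable ?PI G"
  proof (rule PIp.integrable_const_bound[where B="real N * (2 * c)"])
    show "AE x in ?PI. norm (G x) \<le> real N * (2 * c)"
    proof (rule AE_I2)
      fix x assume x: "x \<in> space ?PI"
      show "norm (G x) \<le> real N * (2 * c)" unfolding G_def real_norm_def
      proof (rule sup_abs_le[OF C(2)])
        fix w assume w: "w \<in> C"
        have "\<bar>LD w\<bar> \<le> c" unfolding LD_def by (rule prob_abs_integral_le[OF D hm[OF w]]) (use hb w in auto)
        then show "\<bar>\<Sum>i<N. (LD w - h w (x i))\<bar> \<le> real N * (2 * c)"
          by (intro sum_abs_bound) (use hb[OF w] x in \<open>force intro: space_PiM_comp\<close>)
      qed
    qed
  qed (rule Gm)
  have iint: "integrable ?PI (\<lambda>x. \<integral>y. Hx x y \<partial>?PJ)"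
  proof (rule PIp.integrable_const_bound[where B="real N * (2 * c)"])
    show "AE x in ?PI. norm (\<integral>y. Hx x y \<partial>?PJ) \<le> real N * (2 * c)"
    proof (rule AE_I2)
      fix x assume x: "x \<in> space ?PI"
      show "norm (\<integral>y. Hx x y \<partial>?PJ) \<le> real N * (2 * c)" unfolding real_norm_def
        by (rule prob_abs_integral_le[OF prob_space_PiM Hxm[OF x]])
           (use D x in \<open>auto intro!: Hxabs intro: space_PiM_comp\<close>)
    qed
    show "(\<lambda>x. \<integral>y. Hx x y \<partial>?PJ) \<in> borel_measurable ?PI"
      using sigma_finite_measure.borel_measurable_lebesgue_integral[OF prob_space_imp_sigma_finite[OF prob_space_PiM], of ?J "\<lambda>_. D" Hx ?PI] Hx2m D
      by auto
  qed
  have "(\<integral>x. G x \<partial>?PI) \<le> (\<integral>x. (\<integral>y. Hx x y \<partial>?PJ) \<partial>?PI)"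
    by (rule integral_mono[OF Gint iint Gle])
  also have "\<dots> = (\<integral>\<omega>. H \<omega> \<partial>?P)" by (rule fold[symmetric])
  also have "\<dots> \<le> 2 * Rc" by (rule Hle)
  finally show ?thesis unfolding G_def LD_def .
qed

definition hh :: "real^'n^'n \<Rightarrow> (real \<Rightarrow> 'y \<Rightarrow> real) \<Rightarrow> real \<Rightarrow> real^'n^'m \<Rightarrow> (real^'n^'m) \<times> 'y \<Rightarrow> real" where
  "hh V \<Phi> R' W z = (if normHV V (fst z) \<le> R' then \<Phi> (bb V W (fst z)) (snd z) else 0)"

lemma sup_diff_le:
  fixes f g :: "'w \<Rightarrow> real"
  assumes C: "C \<noteq> {}" and bf: "bdd_above (f ` C)" and bg: "bdd_above (g ` C)"
    and d: "\<And>w. w \<in> C \<Longrightarrow> \<bar>f w - g w\<bar> \<le> k"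
  shows "\<bar>(SUP w\<in>C. f w) - (SUP w\<in>C. g w)\<bar> \<le> k"
proof -
  have "(SUP w\<in>C. f w) \<le> (SUP w\<in>C. g w) + k"
  proof (rule cSUP_least[OF C])
    fix w assume w: "w \<in> C"
    have "g w \<le> (SUP w\<in>C. g w)" by (rule cSUP_upper[OF w bg])
    then show "f w \<le> (SUP w\<in>C. g w) + k" using d[OF w] by linarith
  qed
  moreover have "(SUP w\<in>C. g w) \<le> (SUP w\<in>C. f w) + k"
  proof (rule cSUP_least[OF C])
    fix w assume w: "w \<in> C"
    have "f w \<le> (SUP w\<in>C. f w)" by (rule cSUP_upper[OF w bf])
    then show "g w \<le> (SUP w\<in>C. f w) + k" using d[OF w] by linarith
  qed
  ultimately show ?thesis by linarith
qed

context
  fixes V :: "real^'n^'n" and D :: "((real^'n^'m) \<times> 'y) measure" and Y :: "'y measure"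
    and \<Phi> :: "real \<Rightarrow> 'y \<Rightarrow> real" and R' B' \<rho> c' :: real
  assumes symV: "transpose V = V"
    and psd: "\<forall>X::real^'n^'m. inner (innerH X X) (Vnormalized V) \<ge> 0"
    and Dp: "prob_space D" and setsD: "sets D = sets (borel \<Otimes>\<^sub>M Y)"
    and AEn: "AE p in D. normHV V (fst p) \<le> R'"
    and Phim: "(\<lambda>(a, y). \<Phi> a y) \<in> borel_measurable (borel \<Otimes>\<^sub>M Y)"
    and lip: "\<forall>y\<in>space Y. lipschitz_on \<rho> UNIV (\<lambda>a. \<Phi> a y)"
    and bnd: "\<forall>y\<in>space Y. \<forall>a\<in>{-(B' * R')..B' * R'}. \<bar>\<Phi> a y\<bar> \<le> c'"
    and B0: "0 \<le> B'"
begin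

lemma nrm_nonneg: "normHV V X \<ge> 0" for X :: "real^'n^'m"
  by (rule normHV_nonneg[OF symV psd])

lemma R0: "0 \<le> R'"
proof -
  interpret prob_space D by (rule Dp)
  have "AE p in D. 0 \<le> R'" using AEn by eventually_elim (use nrm_nonneg order_trans in blast)
  then show ?thesis by simp
qed

lemma spaceD: "space D = UNIV \<times> space Y"
  using sets_eq_imp_space_eq[OF setsD] by (simp add: space_pair_measure)

lemma spY: "space Y \<noteq> {}"
proof -
  interpret prob_space D by (rule Dp)
  show ?thesis using not_empty spaceD by auto
qed

lemma snd_sp: "z \<in> space D \<Longrightarrow> snd z \<in> space Y"
  using spaceD by auto

lemma rho0: "0 \<le> \<rho>"
  using spY lip lipschitz_on_nonneg by blast

lemma c0: "0 \<le> c'"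
proof -
  obtain y where y: "y \<in> space Y" using spY by blast
  have "0 \<in> {-(B' * R')..B' * R'}" using B0 R0 by simp
  then have "\<bar>\<Phi> 0 y\<bar> \<le> c'" using bnd y by blast
  then show ?thesis by linarith
qed

lemma Phi_lip: "y \<in> space Y \<Longrightarrow> \<bar>\<Phi> u y - \<Phi> v y\<bar> \<le> \<rho> * \<bar>u - v\<bar>"
  using lipschitz_onD[of \<rho> UNIV "\<lambda>a. \<Phi> a y" u v] lip by (auto simp: dist_real_def)

lemma lossV_eq: "normHV V (fst z) \<le> R' \<Longrightarrow> lossV \<Phi> V W z = hh V \<Phi> R' W z"
  unfolding lossV_def hh_def bb_def by simp

lemma bb_bound: "normHV V W \<le> B' \<Longrightarrow> normHV V X \<le> R' \<Longrightarrow> \<bar>bb V W X\<bar> \<le> B' * R'"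
  for W X :: "real^'n^'m"
  using bb_CS[OF symV psd, of W X] mult_mono[of "normHV V W" B' "normHV V X" R'] nrm_nonneg[of W] nrm_nonneg[of X] B0
  by linarith

lemma hh_bound: "normHV V W \<le> B' \<Longrightarrow> z \<in> space D \<Longrightarrow> \<bar>hh V \<Phi> R' W z\<bar> \<le> c'"
proof -
  assume W: "normHV V W \<le> B'" and z: "z \<in> space D"
  show ?thesis
  proof (cases "normHV V (fst z) \<le> R'")
    case True
    then have "bb V W (fst z) \<in> {-(B' * R')..B' * R'}" using bb_bound[OF W True] by auto
    then show ?thesis using bnd snd_sp[OF z] True unfolding hh_def by auto
  qed (use c0 in \<open>auto simp: hh_def\<close>)
qed

lemma hh_lip: "z \<in> space D \<Longrightarrow> \<bar>hh V \<Phi> R' W z - hh V \<Phi> R' W' z\<bar> \<le> \<rho> * R' * normHV V (W - W')"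
proof -
  assume z: "z \<in> space D"
  show ?thesis
  proof (cases "normHV V (fst z) \<le> R'")
    case True
    have a: "\<bar>hh V \<Phi> R' W z - hh V \<Phi> R' W' z\<bar> \<le> \<rho> * \<bar>bb V W (fst z) - bb V W' (fst z)\<bar>"
      using True Phi_lip[OF snd_sp[OF z]] unfolding hh_def by simp
    have b: "\<bar>bb V W (fst z) - bb V W' (fst z)\<bar> \<le> normHV V (W - W') * R'"
    proof -
      have "\<bar>bb V W (fst z) - bb V W' (fst z)\<bar> = \<bar>bb V (W - W') (fst z)\<bar>" by (simp add: bb_diff_left)
      also have "\<dots> \<le> normHV V (W - W') * normHV V (fst z)" by (rule bb_CS[OF symV psd])
      also have "\<dots> \<le> normHV V (W - W') * R'" using True nrm_nonneg by (intro mult_left_mono) auto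
      finally show ?thesis .
    qed
    have "\<rho> * \<bar>bb V W (fst z) - bb V W' (fst z)\<bar> \<le> \<rho> * (normHV V (W - W') * R')"
      by (rule mult_left_mono[OF b rho0])
    then show ?thesis using a by (simp add: mult_ac)
  next
    case False
    then show ?thesis unfolding hh_def using rho0 R0 nrm_nonneg by simp
  qed
qed

lemma nrm_meas: "(\<lambda>z::(real^'n^'m) \<times> 'y. normHV V (fst z)) \<in> borel_measurable (borel \<Otimes>\<^sub>M Y)"
proof -
  have "(\<lambda>x::real^'n^'m. normHV V x) \<in> borel_measurable borel"
    using continuous_normHV[OF symV psd, of 0] by (intro borel_measurable_continuous_onI) simp
  from measurable_comp[OF measurable_fst this, of Y] show ?thesis by (simp add: comp_def)
qed

lemma Phi_comp_meas: "(\<lambda>z. \<Phi> (bb V W (fst z)) (snd z)) \<in> borel_measurable (borel \<Otimes>\<^sub>M Y)"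
  for W :: "real^'n^'m"
proof -
  have bm: "(\<lambda>x::real^'n^'m. bb V W x) \<in> borel_measurable borel"
    by (intro borel_measurable_continuous_onI continuous_bb continuous_intros)
  have pm: "(\<lambda>z. (bb V W (fst z), snd z)) \<in> measurable (borel \<Otimes>\<^sub>M Y) (borel \<Otimes>\<^sub>M Y)"
    by (intro measurable_Pair measurable_compose[OF measurable_fst bm] measurable_snd)
  show ?thesis using measurable_comp[OF pm Phim] by (simp add: comp_def)
qed

lemma hh_meas: "hh V \<Phi> R' W \<in> borel_measurable D"
proof -
  have "hh V \<Phi> R' W \<in> borel_measurable (borel \<Otimes>\<^sub>M Y)"
    unfolding hh_def[abs_def]
    by (intro measurable_If Phi_comp_meas borel_measurable_const) (use nrm_meas in measurable)
  then show ?thesis unfolding measurable_cong_sets[OF setsD refl] .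
qed

lemma lossV_meas: "lossV \<Phi> V W \<in> borel_measurable D"
proof -
  have "lossV \<Phi> V W = (\<lambda>z. \<Phi> (bb V W (fst z)) (snd z))"
    unfolding lossV_def[abs_def] bb_def by simp
  then show ?thesis unfolding measurable_cong_sets[OF setsD refl] using Phi_comp_meas by simp
qed

lemma LD_eq: "(\<integral>p. lossV \<Phi> V W p \<partial>D) = (\<integral>z. hh V \<Phi> R' W z \<partial>D)"
proof -
  have "AE x in D. lossV \<Phi> V W x = hh V \<Phi> R' W x" using AEn by eventually_elim (rule lossV_eq)
  then show ?thesis by (rule integral_cong_AE[OF lossV_meas hh_meas])
qed

lemma LD_lip:
  assumes "normHV V W \<le> B'" "normHV V W' \<le> B'"
  shows "\<bar>(\<integral>z. hh V \<Phi> R' W z \<partial>D) - (\<integral>z. hh V \<Phi> R' W' z \<partial>D)\<bar> \<le> \<rho> * R' * normHV V (W - W')"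
proof -
  interpret prob_space D by (rule Dp)
  have int: "integrable D (hh V \<Phi> R' U)" if "normHV V U \<le> B'" for U
    by (rule integrable_const_bound[where B=c']) (use hh_bound[OF that] hh_meas in auto)
  have "(\<integral>z. hh V \<Phi> R' W z \<partial>D) - (\<integral>z. hh V \<Phi> R' W' z \<partial>D) = (\<integral>z. (hh V \<Phi> R' W z - hh V \<Phi> R' W' z) \<partial>D)"
    by (rule Bochner_Integration.integral_diff[symmetric, OF int int]) (use assms in auto)
  also have "\<bar>\<dots>\<bar> \<le> \<rho> * R' * normHV V (W - W')"
    by (rule prob_abs_integral_le[OF Dp]) (use hh_meas hh_lip in auto)
  finally show ?thesis .
qed

end

lemma normHV_zero[simp]: "normHV V 0 = 0"
  unfolding normHV_bb by simp

context
  fixes V :: "real^'n^'n" and D :: "((real^'n^'m) \<times> 'y) measure" and Y :: "'y measure"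
    and \<Phi> :: "real \<Rightarrow> 'y \<Rightarrow> real" and R' B' \<rho> c' :: real
  assumes symV: "transpose V = V"
    and psd: "\<forall>X::real^'n^'m. inner (innerH X X) (Vnormalized V) \<ge> 0"
    and Dp: "prob_space D" and setsD: "sets D = sets (borel \<Otimes>\<^sub>M Y)"
    and AEn: "AE p in D. normHV V (fst p) \<le> R'"
    and Phim: "(\<lambda>(a, y). \<Phi> a y) \<in> borel_measurable (borel \<Otimes>\<^sub>M Y)"
    and lip: "\<forall>y\<in>space Y. lipschitz_on \<rho> UNIV (\<lambda>a. \<Phi> a y)"
    and bnd: "\<forall>y\<in>space Y. \<forall>a\<in>{-(B' * R')..B' * R'}. \<bar>\<Phi> a y\<bar> \<le> c'"
    and B0: "0 \<le> B'"
begin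

lemmas hb' = hh_bound[OF symV psd Dp setsD AEn Phim lip bnd B0]
lemmas hl' = hh_lip[OF symV psd Dp setsD AEn Phim lip bnd B0]
lemmas hm' = hh_meas[OF symV psd Dp setsD AEn Phim lip bnd B0]
lemmas LDl' = LD_lip[OF symV psd Dp setsD AEn Phim lip bnd B0]
lemmas LDe' = LD_eq[OF symV psd Dp setsD AEn Phim lip bnd B0]
lemmas lossEq' = lossV_eq[OF symV psd Dp setsD AEn Phim lip bnd B0]
lemmas R0' = R0[OF symV psd Dp setsD AEn Phim lip bnd B0]
lemmas rho0' = rho0[OF symV psd Dp setsD AEn Phim lip bnd B0]
lemmas c0' = c0[OF symV psd Dp setsD AEn Phim lip bnd B0]
lemmas snd_sp' = snd_sp[OF symV psd Dp setsD AEn Phim lip bnd B0]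
lemmas Phi_lip' = Phi_lip[OF symV psd Dp setsD AEn Phim lip bnd B0]
lemmas bb_bound' = bb_bound[OF symV psd Dp setsD AEn Phim lip bnd B0]
lemmas nrm_nonneg' = nrm_nonneg[OF symV psd Dp setsD AEn Phim lip bnd B0]
lemmas nrm_meas' = nrm_meas[OF symV psd Dp setsD AEn Phim lip bnd B0]

lemma dense_C:
  obtains C :: "(real^'n^'m) set" where "countable C" "C \<subseteq> {W. normHV V W \<le> B'}" "C \<noteq> {}"
    "\<And>W e. normHV V W \<le> B' \<Longrightarrow> e > 0 \<Longrightarrow> \<exists>w\<in>C. normHV V (w - W) < e"
proof -
  obtain Dd :: "(real^'n^'m) set" where Dd: "countable Dd" "\<And>X. open X \<Longrightarrow> X \<noteq> {} \<Longrightarrow> \<exists>d\<in>Dd. d \<in> X"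
    using countable_dense_exists by blast
  define K where "K = {W::real^'n^'m. normHV V W \<le> B'}"
  define Pk where "Pk = {(d, k::nat). d \<in> Dd \<and> (\<exists>w\<in>K. normHV V (w - d) < 1 / real (Suc k))}"
  define pick where "pick = (\<lambda>(d, k::nat). SOME w. w \<in> K \<and> normHV V (w - d) < 1 / real (Suc k))"
  define C where "C = pick ` Pk"
  have "countable (Dd \<times> (UNIV :: nat set))" using Dd(1) by simp
  then have "countable Pk" by (rule countable_subset[rotated]) (auto simp: Pk_def)
  then have cC: "countable C" unfolding C_def by simp
  have pk: "pick (d, k) \<in> K \<and> normHV V (pick (d, k) - d) < 1 / real (Suc k)" if "(d, k) \<in> Pk" for d k
  proof -
    have "\<exists>w. w \<in> K \<and> normHV V (w - d) < 1 / real (Suc k)" using that unfolding Pk_def by auto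
    from someI_ex[OF this] show ?thesis unfolding pick_def by simp
  qed
  have CK: "C \<subseteq> K" unfolding C_def using pk by auto
  have dense: "\<exists>w\<in>C. normHV V (w - W) < e" if W: "W \<in> K" and e: "e > 0" for W e
  proof -
    obtain k where k: "inverse (real (Suc k)) < e / 2" using reals_Archimedean[of "e/2"] e by auto
    define U where "U = {x. normHV V (x - W) < 1 / real (Suc k)}"
    have "open U" unfolding U_def
      by (rule open_Collect_less[OF continuous_normHV[OF symV psd] continuous_on_const])
    moreover have "W \<in> U" unfolding U_def by simp
    ultimately obtain d where d: "d \<in> Dd" "d \<in> U" using Dd(2) by blast
    have dW: "normHV V (W - d) < 1 / real (Suc k)"
      using d(2) normHV_diff_commute[OF symV psd, of W d] unfolding U_def by simp
    then have "(d, k) \<in> Pk" unfolding Pk_def using d(1) W by blast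
    then have w: "pick (d, k) \<in> C" "normHV V (pick (d, k) - d) < 1 / real (Suc k)"
      using pk unfolding C_def by auto
    have "normHV V (pick (d, k) - W) \<le> normHV V (pick (d, k) - d) + normHV V (d - W)"
      by (rule normHV_diff_tri[OF symV psd])
    also have "\<dots> < 1 / real (Suc k) + 1 / real (Suc k)" using w(2) d(2) unfolding U_def by simp
    also have "\<dots> < e" using k by (simp add: inverse_eq_divide)
    finally show ?thesis using w(1) by blast
  qed
  have "0 \<in> K" unfolding K_def using B0 by simp
  then have Cne: "C \<noteq> {}" using dense[of 0 1] by auto
  show ?thesis
  proof (rule that[OF cC _ Cne])
    show "C \<subseteq> {W. normHV V W \<le> B'}" using CK unfolding K_def .
    fix W :: "real^'n^'m" and e :: real
    assume "normHV V W \<le> B'" "e > 0"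
    then show "\<exists>w\<in>C. normHV V (w - W) < e" using dense unfolding K_def by blast
  qed
qed

lemma Rbound:
  fixes C :: "(real^'n^'m) set" and S :: "nat \<Rightarrow> (real^'n^'m) \<times> 'y"
  assumes CK: "C \<subseteq> {W. normHV V W \<le> B'}" and C: "C \<noteq> {}"
    and S: "\<And>i. i < N \<Longrightarrow> S i \<in> space D" and s: "s = -1 \<or> s = 1"
  shows "(\<Sum>\<sigma>\<in>sigs N. SUP w\<in>C. \<Sum>i<N. \<sigma> i * (s * hh V \<Phi> R' w (S i)))
       \<le> 2 ^ N * (\<rho> * B' * R' * sqrt (real N))"
proof -
  define good where "good i \<longleftrightarrow> normHV V (fst (S i)) \<le> R'" for i
  define Xt where "Xt i = (if good i then fst (S i) else 0)" for i
  define \<phi> where "\<phi> i u = s * (if good i then \<Phi> u (snd (S i)) else 0)" for i u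
  define a where "a i w = bb V w (Xt i)" for i w
  have eq: "s * hh V \<Phi> R' w (S i) = \<phi> i (a i w)" for i w
    unfolding hh_def \<phi>_def a_def Xt_def good_def by simp
  have Xt: "normHV V (Xt i) \<le> R'" for i
    unfolding Xt_def good_def using R0' by auto
  have "(\<Sum>\<sigma>\<in>sigs N. SUP w\<in>C. \<Sum>i<N. \<sigma> i * (s * hh V \<Phi> R' w (S i)))
      = (\<Sum>\<sigma>\<in>sigs N. SUP w\<in>C. \<Sum>i<N. \<sigma> i * \<phi> i (a i w))"
    by (simp only: eq)
  also have "\<dots> \<le> (\<Sum>\<sigma>\<in>sigs N. SUP w\<in>C. \<Sum>i<N. \<sigma> i * (\<rho> * a i w))"
  proof (rule contraction[OF C rho0', where M="B' * R' + c'"])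
    fix i u v assume i: "i < N"
    show "\<bar>\<phi> i u - \<phi> i v\<bar> \<le> \<rho> * \<bar>u - v\<bar>"
    proof (cases "good i")
      case True
      have "\<bar>\<phi> i u - \<phi> i v\<bar> = \<bar>\<Phi> u (snd (S i)) - \<Phi> v (snd (S i))\<bar>"
        unfolding \<phi>_def using True s by (auto simp: abs_minus_commute right_diff_distrib[symmetric])
      also have "\<dots> \<le> \<rho> * \<bar>u - v\<bar>" by (rule Phi_lip'[OF snd_sp'[OF S[OF i]]])
      finally show ?thesis .
    next
      case False
      then show ?thesis unfolding \<phi>_def using rho0' by simp
    qed
  next
    fix w i assume w: "w \<in> C" and i: "i < N"
    have wB: "normHV V w \<le> B'" using CK w by auto
    have "\<bar>a i w\<bar> \<le> B' * R'" unfolding a_def by (rule bb_bound'[OF wB Xt])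
    then show "\<bar>a i w\<bar> \<le> B' * R' + c'" using c0' by linarith
    have "\<bar>\<phi> i (a i w)\<bar> = \<bar>hh V \<Phi> R' w (S i)\<bar>" unfolding eq[symmetric] using s by auto
    also have "\<dots> \<le> c'" by (rule hb'[OF wB S[OF i]])
    finally show "\<bar>\<phi> i (a i w)\<bar> \<le> B' * R' + c'" using B0 R0' by (simp add: add_increasing)
  qed
  also have "\<dots> \<le> 2 ^ N * (\<rho> * B' * R' * sqrt (real N))"
    unfolding a_def by (rule rad_linear[OF symV psd C _ Xt rho0' B0 R0']) (use CK in auto)
  finally show ?thesis .
qed

end

context
  fixes V :: "real^'n^'n" and D :: "((real^'n^'m) \<times> 'y) measure" and Y :: "'y measure"
    and \<Phi> :: "real \<Rightarrow> 'y \<Rightarrow> real" and R' B' \<rho> c' :: real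
  assumes symV: "transpose V = V"
    and psd: "\<forall>X::real^'n^'m. inner (innerH X X) (Vnormalized V) \<ge> 0"
    and Dp: "prob_space D" and setsD: "sets D = sets (borel \<Otimes>\<^sub>M Y)"
    and AEn: "AE p in D. normHV V (fst p) \<le> R'"
    and Phim: "(\<lambda>(a, y). \<Phi> a y) \<in> borel_measurable (borel \<Otimes>\<^sub>M Y)"
    and lip: "\<forall>y\<in>space Y. lipschitz_on \<rho> UNIV (\<lambda>a. \<Phi> a y)"
    and bnd: "\<forall>y\<in>space Y. \<forall>a\<in>{-(B' * R')..B' * R'}. \<bar>\<Phi> a y\<bar> \<le> c'"
    and B0: "0 \<le> B'"
begin

lemmas hb'' = hh_bound[OF symV psd Dp setsD AEn Phim lip bnd B0]
lemmas hl'' = hh_lip[OF symV psd Dp setsD AEn Phim lip bnd B0]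
lemmas hm'' = hh_meas[OF symV psd Dp setsD AEn Phim lip bnd B0]
lemmas LDl'' = LD_lip[OF symV psd Dp setsD AEn Phim lip bnd B0]
lemmas LDe'' = LD_eq[OF symV psd Dp setsD AEn Phim lip bnd B0]
lemmas lossEq'' = lossV_eq[OF symV psd Dp setsD AEn Phim lip bnd B0]
lemmas R0'' = R0[OF symV psd Dp setsD AEn Phim lip bnd B0]
lemmas rho0'' = rho0[OF symV psd Dp setsD AEn Phim lip bnd B0]
lemmas c0'' = c0[OF symV psd Dp setsD AEn Phim lip bnd B0]
lemmas nrm_meas'' = nrm_meas[OF symV psd Dp setsD AEn Phim lip bnd B0]
lemmas dense'' = dense_C[OF symV psd Dp setsD AEn Phim lip bnd B0]
lemmas Rbound'' = Rbound[OF symV psd Dp setsD AEn Phim lip bnd B0]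

lemma main_lemma:
  fixes \<delta> :: real and N :: nat
  assumes \<delta>0: "0 < \<delta>" and \<delta>1: "\<delta> < 1" and N1: "N \<ge> 1"
  shows "\<exists>A \<in> sets (PiM {..<N} (\<lambda>_. D)).
           A \<subseteq> {S \<in> space (PiM {..<N} (\<lambda>_. D)).
                 \<forall>W::real^'n^'m. normHV V W \<le> B' \<longrightarrow>
                   (\<integral>p. lossV \<Phi> V W p \<partial>D)
                   \<le> (\<Sum>i<N. lossV \<Phi> V W (S i)) / real N
                      + 2 * \<rho> * B' * R' / sqrt (real N)
                      + c' * sqrt (2 * ln (2 / \<delta>) / real N)}
           \<and> measure (PiM {..<N} (\<lambda>_. D)) A \<ge> 1 - \<delta>"
proof -
  let ?\<Omega> = "PiM {..<N} (\<lambda>_. D)"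
  interpret Dpp: prob_space D by (rule Dp)
  interpret Op: prob_space ?\<Omega> by (rule prob_space_PiM) (simp add: Dp)
  obtain C :: "(real^'n^'m) set" where C: "countable C" "C \<subseteq> {W. normHV V W \<le> B'}" "C \<noteq> {}"
    and dense: "\<And>W e. normHV V W \<le> B' \<Longrightarrow> e > 0 \<Longrightarrow> \<exists>w\<in>C. normHV V (w - W) < e"
    by (rule dense'') blast
  have CK: "normHV V w \<le> B'" if "w \<in> C" for w using C(2) that by auto
  define LD where "LD w = (\<integral>z. hh V \<Phi> R' w z \<partial>D)" for w
  define G where "G S = (SUP w\<in>C. \<Sum>i<N. (LD w - hh V \<Phi> R' w (S i)))" for S
  define E where "E = (\<integral>S. G S \<partial>?\<Omega>)"
  define Rc where "Rc = \<rho> * B' * R' * sqrt (real N)"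
  define t where "t = c' * sqrt (2 * ln (2 / \<delta>) / real N)"
  have hbC: "\<bar>hh V \<Phi> R' w z\<bar> \<le> c'" if "w \<in> C" "z \<in> space D" for w z
    using hb''[OF CK[OF that(1)] that(2)] .
  have LDb: "\<bar>LD w\<bar> \<le> c'" if "w \<in> C" for w
    unfolding LD_def by (rule prob_abs_integral_le[OF Dp hm'']) (use hbC that in auto)
  have Ssp: "S i \<in> space D" if "S \<in> space ?\<Omega>" "i < N" for S i
    using that by (auto intro: space_PiM_comp)
  have termb: "\<bar>\<Sum>i<N. (LD w - hh V \<Phi> R' w (S i))\<bar> \<le> real N * (2 * c')"
    if "S \<in> space ?\<Omega>" "w \<in> C" for S w
  proof (rule sum_abs_bound)
    fix i assume i: "i < N"
    show "\<bar>LD w - hh V \<Phi> R' w (S i)\<bar> \<le> 2 * c'"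
      using LDb[OF that(2)] hbC[OF that(2) Ssp[OF that(1) i]] by linarith
  qed
  have bddG: "bdd_above ((\<lambda>w. \<Sum>i<N. (LD w - hh V \<Phi> R' w (S i))) ` C)" if "S \<in> space ?\<Omega>" for S
    using termb[OF that] by (rule bdd_of_abs)
  have Gm: "G \<in> borel_measurable ?\<Omega>"
    unfolding G_def
  proof (rule borel_measurable_cSUP[OF C(1)])
    fix w assume w: "w \<in> C"
    show "(\<lambda>S. \<Sum>i<N. (LD w - hh V \<Phi> R' w (S i))) \<in> borel_measurable ?\<Omega>"
      by (intro borel_measurable_sum borel_measurable_diff borel_measurable_const comp_meas hm'') auto
  qed (rule bddG)
  have Gb: "\<bar>G S\<bar> \<le> real N * (2 * c')" if "S \<in> space ?\<Omega>" for S
    unfolding G_def by (rule sup_abs_le[OF C(3)]) (use termb that in blast)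
  have Gd: "\<bar>G S - G (S(i:=z))\<bar> \<le> 2 * c'" if S: "S \<in> space ?\<Omega>" and i: "i < N" and z: "z \<in> space D" for S i z
  proof -
    have S': "S(i:=z) \<in> space ?\<Omega>" using S i z by (auto simp: space_PiM PiE_iff extensional_def)
    show ?thesis unfolding G_def
    proof (rule sup_diff_le[OF C(3) bddG[OF S] bddG[OF S']])
      fix w assume w: "w \<in> C"
      have "(\<Sum>j<N. (LD w - hh V \<Phi> R' w (S j))) - (\<Sum>j<N. (LD w - hh V \<Phi> R' w ((S(i:=z)) j)))
          = (\<Sum>j<N. (if j = i then hh V \<Phi> R' w z - hh V \<Phi> R' w (S i) else 0))"
        unfolding sum_subtractf[symmetric] by (rule sum.cong) auto
      also have "\<dots> = hh V \<Phi> R' w z - hh V \<Phi> R' w (S i)" using i by simp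
      finally show "\<bar>(\<Sum>j<N. (LD w - hh V \<Phi> R' w (S j))) - (\<Sum>j<N. (LD w - hh V \<Phi> R' w ((S(i:=z)) j)))\<bar> \<le> 2 * c'"
        using hbC[OF w z] hbC[OF w Ssp[OF S i]] by linarith
    qed
  qed
  have Eb: "E \<le> 2 * Rc"
    unfolding E_def G_def LD_def Rc_def
    by (rule symmetrization[OF Dp C(1) C(3) hm'' hbC Rbound''[OF C(2) C(3)]]) auto
  define f where "f z = normHV V (fst z)" for z :: "(real^'n^'m) \<times> 'y"
  have fm[measurable]: "f \<in> borel_measurable D"
    unfolding f_def measurable_cong_sets[OF setsD refl] by (rule nrm_meas'')
  define Good where "Good = {S \<in> space ?\<Omega>. \<forall>i<N. f (S i) \<le> R'}"
  have Good_sets: "Good \<in> sets ?\<Omega>" unfolding Good_def by measurable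
  have "AE S in ?\<Omega>. \<forall>i\<in>{..<N}. f (S i) \<le> R'"
  proof (rule AE_finite_allI)
    fix i assume "i \<in> {..<N}"
    then show "AE S in ?\<Omega>. f (S i) \<le> R'"
      using AE_PiM_component[of "{..<N}" "\<lambda>_. D" i "\<lambda>z. f z \<le> R'"] AEn Dp unfolding f_def by auto
  qed simp
  then have AEG: "AE S in ?\<Omega>. S \<in> Good" unfolding Good_def by (auto elim: eventually_mono)
  have "emeasure ?\<Omega> (space ?\<Omega> - Good) = 0"
    using AE_iff_measurable[of "space ?\<Omega> - Good" ?\<Omega> "\<lambda>S. S \<in> Good"] AEG Good_sets by auto
  then have mGood: "measure ?\<Omega> (space ?\<Omega> - Good) = 0" by (simp add: measure_def)
  define Bset where "Bset = {S \<in> space ?\<Omega>. G S - E > real N * t}"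
  have Bset_sets: "Bset \<in> sets ?\<Omega>" unfolding Bset_def using Gm by measurable
  have mB: "measure ?\<Omega> Bset \<le> \<delta> / 2"
  proof (cases "c' = 0")
    case True
    have G0: "G S = 0" if "S \<in> space ?\<Omega>" for S using Gb[OF that] True by simp
    have "\<bar>E\<bar> \<le> 0" unfolding E_def by (rule prob_abs_integral_le[OF Op.prob_space_axioms Gm]) (use G0 in simp)
    then have "Bset = {}" unfolding Bset_def using G0 True by (auto simp: t_def)
    then show ?thesis using \<delta>0 by simp
  next
    case False
    then have cp: "c' > 0" using c0'' by simp
    have l2: "ln (2 / \<delta>) > 0" using \<delta>0 \<delta>1 by (simp add: ln_gt_zero_iff)
    have Np: "real N > 0" using N1 by simp
    have tp: "t > 0" unfolding t_def using cp l2 Np by simp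
    have t2: "t\<^sup>2 = c'\<^sup>2 * (2 * ln (2 / \<delta>) / real N)"
      unfolding t_def power_mult_distrib using l2 Np by simp
    have "Bset \<subseteq> {S \<in> space ?\<Omega>. G S - E \<ge> real N * t}" unfolding Bset_def by auto
    then have "measure ?\<Omega> Bset \<le> measure ?\<Omega> {S \<in> space ?\<Omega>. G S - E \<ge> real N * t}"
      by (intro Op.finite_measure_mono) (use Gm in measurable)
    also have "\<dots> \<le> exp (-2 * (real N * t)\<^sup>2 / (real N * (2 * c')\<^sup>2))"
      unfolding E_def
      by (rule mcdiarmid[OF Dp Gm Gb Gd]) (use tp cp Np in auto)
    also have "-2 * (real N * t)\<^sup>2 / (real N * (2 * c')\<^sup>2) = - ln (2 / \<delta>)"
      using cp Np unfolding power_mult_distrib t2 by (simp add: field_simps power2_eq_square)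
    also have "exp (- ln (2 / \<delta>)) = \<delta> / 2"
      using \<delta>0 by (simp add: exp_minus)
    finally show ?thesis .
  qed
  define A where "A = Good - Bset"
  have A_sets: "A \<in> sets ?\<Omega>" unfolding A_def using Good_sets Bset_sets by auto
  have "measure ?\<Omega> (space ?\<Omega> - A) \<le> measure ?\<Omega> ((space ?\<Omega> - Good) \<union> Bset)"
    by (rule Op.finite_measure_mono) (use Good_sets Bset_sets in \<open>auto simp: A_def\<close>)
  also have "\<dots> \<le> measure ?\<Omega> (space ?\<Omega> - Good) + measure ?\<Omega> Bset"
    by (rule measure_Un_le) (use Good_sets Bset_sets in auto)
  finally have "measure ?\<Omega> (space ?\<Omega> - A) \<le> \<delta> / 2" using mGood mB by simp
  then have mA: "measure ?\<Omega> A \<ge> 1 - \<delta>" using Op.prob_compl[OF A_sets] \<delta>0 by simp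
  have incl: "(\<integral>p. lossV \<Phi> V W p \<partial>D)
                   \<le> (\<Sum>i<N. lossV \<Phi> V W (S i)) / real N
                      + 2 * \<rho> * B' * R' / sqrt (real N)
                      + c' * sqrt (2 * ln (2 / \<delta>) / real N)"
    if SA: "S \<in> A" and W: "normHV V W \<le> B'" for S W
  proof -
    have S: "S \<in> space ?\<Omega>" and Sg: "\<And>i. i < N \<Longrightarrow> f (S i) \<le> R'" and GS: "G S - E \<le> real N * t"
      using SA unfolding A_def Good_def Bset_def by auto
    have wC: "(\<Sum>i<N. (LD w - hh V \<Phi> R' w (S i))) \<le> 2 * Rc + real N * t" if w: "w \<in> C" for w
    proof -
      have "(\<Sum>i<N. (LD w - hh V \<Phi> R' w (S i))) \<le> G S"
        unfolding G_def by (rule cSUP_upper[OF w bddG[OF S]])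
      then show ?thesis using GS Eb by linarith
    qed
    define \<kappa> where "\<kappa> = 2 * real N * \<rho> * R'"
    have \<kappa>0: "\<kappa> \<ge> 0" unfolding \<kappa>_def using rho0'' R0'' by simp
    have key: "(\<Sum>i<N. (LD W - hh V \<Phi> R' W (S i))) \<le> 2 * Rc + real N * t"
    proof (rule field_le_epsilon)
      fix e :: real assume e: "e > 0"
      obtain w where w: "w \<in> C" "normHV V (w - W) < e / (\<kappa> + 1)"
        using dense[OF W, of "e / (\<kappa> + 1)"] e \<kappa>0 by auto
      have nWw: "normHV V (W - w) = normHV V (w - W)" by (rule normHV_diff_commute[OF symV psd])
      have "(\<Sum>i<N. (LD W - hh V \<Phi> R' W (S i))) - (\<Sum>i<N. (LD w - hh V \<Phi> R' w (S i)))
          = (\<Sum>i<N. ((LD W - LD w) - (hh V \<Phi> R' W (S i) - hh V \<Phi> R' w (S i))))"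
        by (simp add: sum_subtractf[symmetric] algebra_simps)
      also have "\<dots> \<le> (\<Sum>i<N. (\<rho> * R' * normHV V (W - w) + \<rho> * R' * normHV V (W - w)))"
      proof (rule sum_mono)
        fix i assume "i \<in> {..<N}"
        then have i: "i < N" by simp
        have "\<bar>LD W - LD w\<bar> \<le> \<rho> * R' * normHV V (W - w)"
          unfolding LD_def by (rule LDl''[OF W CK[OF w(1)]])
        moreover have "\<bar>hh V \<Phi> R' W (S i) - hh V \<Phi> R' w (S i)\<bar> \<le> \<rho> * R' * normHV V (W - w)"
          by (rule hl''[OF Ssp[OF S i]])
        ultimately show "(LD W - LD w) - (hh V \<Phi> R' W (S i) - hh V \<Phi> R' w (S i))
            \<le> \<rho> * R' * normHV V (W - w) + \<rho> * R' * normHV V (W - w)" by linarith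
      qed
      also have "\<dots> = \<kappa> * normHV V (w - W)" unfolding \<kappa>_def nWw by simp
      also have "\<dots> \<le> \<kappa> * (e / (\<kappa> + 1))" using w(2) \<kappa>0 by (intro mult_left_mono) auto
      also have "\<dots> \<le> e"
      proof -
        have "\<kappa> * (e / (\<kappa> + 1)) = e * (\<kappa> / (\<kappa> + 1))" by simp
        also have "\<dots> \<le> e * 1" using e \<kappa>0 by (intro mult_left_mono) auto
        finally show ?thesis by simp
      qed
      finally show "(\<Sum>i<N. (LD W - hh V \<Phi> R' W (S i))) \<le> 2 * Rc + real N * t + e"
        using wC[OF w(1)] by linarith
    qed
    have eqs: "hh V \<Phi> R' W (S i) = lossV \<Phi> V W (S i)" if "i < N" for i
      using lossEq''[of "S i" W] Sg[OF that] unfolding f_def by simp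
    have eqL: "LD W = (\<integral>p. lossV \<Phi> V W p \<partial>D)" unfolding LD_def by (rule LDe''[symmetric])
    have "(\<Sum>i<N. (LD W - hh V \<Phi> R' W (S i))) = real N * LD W - (\<Sum>i<N. lossV \<Phi> V W (S i))"
      by (simp add: sum_subtractf eqs)
    with key have k2: "real N * (\<integral>p. lossV \<Phi> V W p \<partial>D) \<le> (\<Sum>i<N. lossV \<Phi> V W (S i)) + 2 * Rc + real N * t"
      unfolding eqL by linarith
    have Np: "real N > 0" using N1 by simp
    have sN: "sqrt (real N) * sqrt (real N) = real N" by simp
    have sNp: "sqrt (real N) > 0" using Np by simp
    have "(\<integral>p. lossV \<Phi> V W p \<partial>D) \<le> ((\<Sum>i<N. lossV \<Phi> V W (S i)) + 2 * Rc + real N * t) / real N"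
      using k2 Np by (simp add: pos_le_divide_eq mult.commute)
    also have "\<dots> = (\<Sum>i<N. lossV \<Phi> V W (S i)) / real N + 2 * Rc / real N + t"
      using Np by (simp add: add_divide_distrib)
    also have "2 * Rc / real N = 2 * \<rho> * B' * R' / sqrt (real N)"
    proof -
      have q: "sqrt (real N) / real N = 1 / sqrt (real N)"
        using sNp Np by (simp add: field_simps)
      have "2 * Rc / real N = 2 * \<rho> * B' * R' * (sqrt (real N) / real N)"
        unfolding Rc_def by simp
      also have "\<dots> = 2 * \<rho> * B' * R' / sqrt (real N)" unfolding q by simp
      finally show ?thesis .
    qed
    finally show ?thesis unfolding t_def .
  qed
  show ?thesis
  proof (rule bexI[OF _ A_sets], intro conjI mA subsetI)
    fix S assume SA: "S \<in> A"
    then have "S \<in> space ?\<Omega>" unfolding A_def Good_def by auto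
    then show "S \<in> {S \<in> space ?\<Omega>. \<forall>W::real^'n^'m. normHV V W \<le> B' \<longrightarrow>
                   (\<integral>p. lossV \<Phi> V W p \<partial>D)
                   \<le> (\<Sum>i<N. lossV \<Phi> V W (S i)) / real N
                      + 2 * \<rho> * B' * R' / sqrt (real N)
                      + c' * sqrt (2 * ln (2 / \<delta>) / real N)}"
      using incl[OF SA] by blast
  qed
qed

end

theorem theorem2:
  fixes V :: "real^'n^'n" and D :: "((real^'n^'m) \<times> 'y) measure" and Y :: "'y measure"
    and \<Phi> :: "real \<Rightarrow> 'y \<Rightarrow> real" and R' B' \<rho> c' \<delta> :: real and N :: nat
  assumes "V \<noteq> 0" and "transpose V = V"
    and "\<forall>X::real^'n^'m. inner (innerH X X) (Vnormalized V) \<ge> 0"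
    and "prob_space D" and "sets D = sets (borel \<Otimes>\<^sub>M Y)"
    and "AE p in D. normHV V (fst p) \<le> R'"
    and "(\<lambda>(a, y). \<Phi> a y) \<in> borel_measurable (borel \<Otimes>\<^sub>M Y)"
    and "\<forall>y\<in>space Y. lipschitz_on \<rho> UNIV (\<lambda>a. \<Phi> a y)"
    and "\<forall>y\<in>space Y. \<forall>a\<in>{-(B' * R')..B' * R'}. \<bar>\<Phi> a y\<bar> \<le> c'"
    and "0 < \<delta>" and "\<delta> < 1" and "N \<ge> 1"
  shows "\<exists>A \<in> sets (PiM {..<N} (\<lambda>_. D)).
           A \<subseteq> {S \<in> space (PiM {..<N} (\<lambda>_. D)).
                 \<forall>W::real^'n^'m. normHV V W \<le> B' \<longrightarrow>
                   (\<integral>p. lossV \<Phi> V W p \<partial>D)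
                   \<le> (\<Sum>i<N. lossV \<Phi> V W (S i)) / real N
                      + 2 * \<rho> * B' * R' / sqrt (real N)
                      + c' * sqrt (2 * ln (2 / \<delta>) / real N)}
           \<and> measure (PiM {..<N} (\<lambda>_. D)) A \<ge> 1 - \<delta>"
proof (cases "B' < 0")
  case True
  let ?\<Omega> = "PiM {..<N} (\<lambda>_. D)"
  interpret Op: prob_space ?\<Omega> by (rule prob_space_PiM) (simp add: assms(4))
  have nW: "\<not> normHV V W \<le> B'" for W :: "real^'n^'m"
    using normHV_nonneg[OF assms(2) assms(3), of W] True by linarith
  show ?thesis
  proof (rule bexI[of _ "space ?\<Omega>"])
    show "space ?\<Omega> \<in> sets ?\<Omega>" by simp
    show "space ?\<Omega> \<subseteq> {S \<in> space ?\<Omega>.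
                 \<forall>W::real^'n^'m. normHV V W \<le> B' \<longrightarrow>
                   (\<integral>p. lossV \<Phi> V W p \<partial>D)
                   \<le> (\<Sum>i<N. lossV \<Phi> V W (S i)) / real N
                      + 2 * \<rho> * B' * R' / sqrt (real N)
                      + c' * sqrt (2 * ln (2 / \<delta>) / real N)}
           \<and> measure ?\<Omega> (space ?\<Omega>) \<ge> 1 - \<delta>"
      using nW Op.prob_space assms(10) by auto
  qed
next
  case False
  then have B0: "0 \<le> B'" by simp
  show ?thesis
    by (rule main_lemma[OF assms(2) assms(3) assms(4) assms(5) assms(6) assms(7) assms(8) assms(9) B0 assms(10) assms(11) assms(12)])
qed

end
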